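(* Let $\epsilon>0$ and let $(Q,K)$, $c(K)$ and $Y=t\,c'(K)\partial_Q-\partial_K$ be as described in the context. Let $\bar f(t,Q,K)$ be a solution of $$\partial_t\bar f - c(K)\,\partial_Q\bar f = 0$$ on $[0,\infty)\times(\mathbb{R}/2\pi\mathbb{Z})\times(0,\infty)$, whose initial data, expressed in $(x,v)$ variables as $f_0(x,v)=\bar f(0,Q,K)$, is smooth, nonnegative, and satisfies $\mathrm{supp}(f_0)\subseteq\{(x,v): c_s\leq \frac{v^2}{2}+\Phi(x)\leq c_s^{-1}\}$ for some $c_s>0$. Then $$\sup_{(t,Q,K)\in[0,\infty)\times\mathbb{T}^1\times[c_s,c_s^{-1}]}\ \sum_{\ell\leq 2}|Y^\ell\bar f|(t,Q,K)\lesssim \sup_{(x,v)\in\mathbb{R}\times\mathbb{R}}\ \sum_{|\alpha|+|\beta|\leq 2}|\partial_x^\alpha\partial_v^\beta f_0|(x,v),$$ where the implicit constant depends only on $\epsilon$ and $c_s$.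
   Context: Let $\Phi(x)=\frac{x^2}{2}+\frac{\epsilon x^4}{2}$ and $H(x,v)=\frac{v^2}{2}+\Phi(x)$. For $(x,v)\neq(0,0)$ define the angle $\chi\in\mathbb{R}/2\pi\mathbb{Z}$ by $\chi=\arcsin\big(v/\sqrt{2H}\big)$ if $x>0$ and $\chi=\pi-\arcsin\big(v/\sqrt{2H}\big)$ if $x\leq 0$; then $(x,v)\mapsto(\chi,H)$ is a bijection onto $(\mathbb{R}/2\pi\mathbb{Z})\times(0,\infty)$, and we write $x=x(\chi,H)$. Set $a(\chi,H)=\sqrt{2}\,\frac{1+2\epsilon x^2}{\sqrt{1+\epsilon x^2}}$ with $x=x(\chi,H)$. Define $c(H)>0$ by $c(H)\int_0^{2\pi}\frac{\mathrm{d}\chi}{a(\chi,H)}=2\pi$, and $Q(\chi,H)=c(H)\int_0^{\chi}\frac{\mathrm{d}\chi'}{a(\chi',H)}$ (well defined modulo $2\pi$), $K=H$. $\mathbb{T}^1=\mathbb{R}/2\pi\mathbb{Z}$. Partial derivatives $\partial_Q,\partial_K$ are taken in the coordinates $(t,Q,K)$. *)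

theory Defs
  imports "HOL-Analysis.Analysis"
begin

definition Phi :: "real \<Rightarrow> real \<Rightarrow> real" where
  "Phi eps x = x^2 / 2 + eps * x^4 / 2"

definition Ham :: "real \<Rightarrow> real \<Rightarrow> real \<Rightarrow> real" where
  "Ham eps x v = v^2 / 2 + Phi eps x"

text \<open>The angle chi, as a real representative (taken modulo 2 pi).\<close>
definition chi :: "real \<Rightarrow> real \<Rightarrow> real \<Rightarrow> real" where
  "chi eps x v = (if x > 0 then arcsin (v / sqrt (2 * Ham eps x v))
                  else pi - arcsin (v / sqrt (2 * Ham eps x v)))"

definition xco :: "real \<Rightarrow> real \<Rightarrow> real \<Rightarrow> real" where
  "xco eps ch H = (THE x. \<exists>v. (x, v) \<noteq> (0, 0) \<and> Ham eps x v = H \<and>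
                       (\<exists>k::int. chi eps x v = ch + 2 * pi * of_int k))"

definition acoef :: "real \<Rightarrow> real \<Rightarrow> real \<Rightarrow> real" where
  "acoef eps ch H = sqrt 2 * (1 + 2 * eps * (xco eps ch H)^2) / sqrt (1 + eps * (xco eps ch H)^2)"

definition cfun :: "real \<Rightarrow> real \<Rightarrow> real" where
  "cfun eps H = 2 * pi / (LBINT ch = 0..2 * pi. 1 / acoef eps ch H)"

text \<open>Q(chi,H) = c(H) int_0^chi 1/a (signed interval integral), meaningful modulo 2 pi.\<close>
definition Qfun :: "real \<Rightarrow> real \<Rightarrow> real \<Rightarrow> real" where
  "Qfun eps ch H = cfun eps H * (LBINT ch' = 0..ch. 1 / acoef eps ch' H)"

definition Qxv :: "real \<Rightarrow> real \<Rightarrow> real \<Rightarrow> real" where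
  "Qxv eps x v = Qfun eps (chi eps x v) (Ham eps x v)"

definition Yop :: "real \<Rightarrow> (real \<Rightarrow> real \<Rightarrow> real \<Rightarrow> real) \<Rightarrow> (real \<Rightarrow> real \<Rightarrow> real \<Rightarrow> real)" where
  "Yop eps f = (\<lambda>t q k. t * deriv (cfun eps) k * deriv (\<lambda>q'. f t q' k) q
                         - deriv (\<lambda>k'. f t q k') k)"

definition pdx :: "(real \<Rightarrow> real \<Rightarrow> real) \<Rightarrow> real \<Rightarrow> real \<Rightarrow> real" where
  "pdx f = (\<lambda>x v. deriv (\<lambda>y. f y v) x)"

definition pdv :: "(real \<Rightarrow> real \<Rightarrow> real) \<Rightarrow> real \<Rightarrow> real \<Rightarrow> real" where
  "pdv f = (\<lambda>x v. deriv (\<lambda>w. f x w) v)"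

fun iter_pd :: "bool list \<Rightarrow> (real \<Rightarrow> real \<Rightarrow> real) \<Rightarrow> real \<Rightarrow> real \<Rightarrow> real" where
  "iter_pd [] f = f"
| "iter_pd (b # bs) f = (if b then pdx else pdv) (iter_pd bs f)"

definition smooth2 :: "(real \<Rightarrow> real \<Rightarrow> real) \<Rightarrow> bool" where
  "smooth2 f \<longleftrightarrow> (\<forall>ops p. (\<lambda>(x, v). iter_pd ops f x v) differentiable (at p))"

end

theory Submission
  imports Defs
begin

definition pd1 :: "(real \<times> real \<Rightarrow> real) \<Rightarrow> real \<times> real \<Rightarrow> real" where
  "pd1 F p = frechet_derivative F (at p) (1, 0)"
definition pd2 :: "(real \<times> real \<Rightarrow> real) \<Rightarrow> real \<times> real \<Rightarrow> real" where
  "pd2 F p = frechet_derivative F (at p) (0, 1)"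

definition cC1 :: "(real \<times> real) set \<Rightarrow> (real \<times> real \<Rightarrow> real) \<Rightarrow> bool" where
  "cC1 S F \<longleftrightarrow> (\<forall>p\<in>S. F differentiable at p) \<and> continuous_on S (pd1 F) \<and> continuous_on S (pd2 F)"
definition cC2 :: "(real \<times> real) set \<Rightarrow> (real \<times> real \<Rightarrow> real) \<Rightarrow> bool" where
  "cC2 S F \<longleftrightarrow> cC1 S F \<and> cC1 S (pd1 F) \<and> cC1 S (pd2 F)"

lemma lin2:
  fixes L :: "real \<times> real \<Rightarrow> real"
  assumes "linear L"
  shows "L h = fst h * L (1, 0) + snd h * L (0, 1)"
proof -
  have e: "fst h *\<^sub>R (1, 0) + snd h *\<^sub>R (0, 1) = h" by (simp add: prod_eq_iff)
  have "L h = L (fst h *\<^sub>R (1, 0) + snd h *\<^sub>R (0, 1))" by (simp only: e)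
  also have "\<dots> = L (fst h *\<^sub>R (1, 0)) + L (snd h *\<^sub>R (0, 1))"
    by (rule linear_add[OF assms])
  also have "\<dots> = fst h *\<^sub>R L (1, 0) + snd h *\<^sub>R L (0, 1)"
    by (simp only: linear_scale[OF assms])
  finally show ?thesis by simp
qed

lemma pd_hasd:
  assumes "F differentiable at p"
  shows "(F has_derivative (\<lambda>h. pd1 F p * fst h + pd2 F p * snd h)) (at p)"
proof -
  have d: "(F has_derivative frechet_derivative F (at p)) (at p)"
    using assms frechet_derivative_works by blast
  have "linear (frechet_derivative F (at p))" using assms linear_frechet_derivative by blast
  then have "frechet_derivative F (at p) = (\<lambda>h. pd1 F p * fst h + pd2 F p * snd h)"
    unfolding pd1_def pd2_def by (intro ext, subst lin2) (auto simp: mult.commute)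
  then show ?thesis using d by simp
qed

lemma pd_eq:
  assumes "(F has_derivative (\<lambda>h. A * fst h + B * snd h)) (at p)"
  shows "pd1 F p = A" "pd2 F p = B"
proof -
  have "frechet_derivative F (at p) = (\<lambda>h. A * fst h + B * snd h)"
    using frechet_derivative_at[OF assms] by simp
  then show "pd1 F p = A" "pd2 F p = B" unfolding pd1_def pd2_def by auto
qed

lemma pd_cong:
  assumes "open S" "p \<in> S" "\<And>x. x \<in> S \<Longrightarrow> F x = G x"
  shows "pd1 F p = pd1 G p" "pd2 F p = pd2 G p"
proof -
  have "(F has_derivative D) (at p) \<longleftrightarrow> (G has_derivative D) (at p)" for D
    using assms has_derivative_transform_within_open[where f=F and f'=D and x=p and t=UNIV and s=S and g=G]
      has_derivative_transform_within_open[where f=G and f'=D and x=p and t=UNIV and s=S and g=F] by auto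
  then have "frechet_derivative F (at p) = frechet_derivative G (at p)"
    unfolding frechet_derivative_def by simp
  then show "pd1 F p = pd1 G p" "pd2 F p = pd2 G p" unfolding pd1_def pd2_def by auto
qed

lemma cC1_intro:
  assumes "open S"
    and "\<And>p. p \<in> S \<Longrightarrow> (F has_derivative (\<lambda>h. A p * fst h + B p * snd h)) (at p)"
    and "continuous_on S A" "continuous_on S B"
  shows "cC1 S F" "\<And>p. p \<in> S \<Longrightarrow> pd1 F p = A p" "\<And>p. p \<in> S \<Longrightarrow> pd2 F p = B p"
proof -
  show P1: "\<And>p. p \<in> S \<Longrightarrow> pd1 F p = A p" "\<And>p. p \<in> S \<Longrightarrow> pd2 F p = B p"
    using pd_eq(1)[OF assms(2)] pd_eq(2)[OF assms(2)] by auto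
  have "continuous_on S (pd1 F) = continuous_on S A" by (rule continuous_on_cong) (auto simp: P1)
  moreover have "continuous_on S (pd2 F) = continuous_on S B" by (rule continuous_on_cong) (auto simp: P1)
  ultimately have "continuous_on S (pd1 F)" "continuous_on S (pd2 F)" using assms(3,4) by auto
  moreover have "\<forall>p\<in>S. F differentiable at p" using assms(2) differentiable_def by blast
  ultimately show "cC1 S F" unfolding cC1_def by auto
qed

lemma cC1_hasd: "cC1 S F \<Longrightarrow> p \<in> S \<Longrightarrow>
   (F has_derivative (\<lambda>h. pd1 F p * fst h + pd2 F p * snd h)) (at p)"
  unfolding cC1_def using pd_hasd by blast

lemma cC1_cont: "cC1 S F \<Longrightarrow> continuous_on S F"
  unfolding cC1_def
  by (meson continuous_at_imp_continuous_on differentiable_imp_continuous_within)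

lemma cC1_cong:
  assumes "open S" "cC1 S F" "\<And>x. x \<in> S \<Longrightarrow> F x = G x"
  shows "cC1 S G"
proof -
  have "(G has_derivative (\<lambda>h. pd1 F p * fst h + pd2 F p * snd h)) (at p)" if "p \<in> S" for p
    using has_derivative_transform_within_open[OF cC1_hasd[OF assms(2) that] assms(1) that] assms(3)
    by auto
  then show ?thesis using cC1_intro(1)[OF assms(1)] assms(2) unfolding cC1_def by blast
qed

lemma cC2_cong:
  assumes "open S" "cC2 S F" "\<And>x. x \<in> S \<Longrightarrow> F x = G x"
  shows "cC2 S G"
proof -
  have e1: "pd1 F x = pd1 G x" "pd2 F x = pd2 G x" if "x \<in> S" for x
    using pd_cong[OF assms(1) that assms(3)] by auto
  have "cC1 S F" "cC1 S (pd1 F)" "cC1 S (pd2 F)" using assms(2) unfolding cC2_def by auto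
  then show ?thesis unfolding cC2_def
    using cC1_cong[OF assms(1), of F G] cC1_cong[OF assms(1), of "pd1 F" "pd1 G"]
      cC1_cong[OF assms(1), of "pd2 F" "pd2 G"] assms(3) e1 by blast
qed

lemma cC2I:
  assumes "open S" "cC1 S F" "cC1 S A" "cC1 S B"
    "\<And>p. p \<in> S \<Longrightarrow> pd1 F p = A p" "\<And>p. p \<in> S \<Longrightarrow> pd2 F p = B p"
  shows "cC2 S F"
proof -
  have "cC1 S (pd1 F)" by (rule cC1_cong[OF assms(1) assms(3)]) (use assms(5) in simp)
  moreover have "cC1 S (pd2 F)" by (rule cC1_cong[OF assms(1) assms(4)]) (use assms(6) in simp)
  ultimately show ?thesis using assms(2) unfolding cC2_def by simp
qed

lemma cC1_const: "open S \<Longrightarrow> cC1 S (\<lambda>p. c)"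
  by (rule cC1_intro(1)[where A="\<lambda>_. 0" and B="\<lambda>_. 0"]) (auto intro!: derivative_eq_intros)

lemma pd_const: "pd1 (\<lambda>p. c) p = 0" "pd2 (\<lambda>p. c) p = 0"
  by (auto intro!: pd_eq derivative_eq_intros)

lemma cC2_const: "open S \<Longrightarrow> cC2 S (\<lambda>p. c)"
  by (rule cC2I[where A="\<lambda>_. 0" and B="\<lambda>_. 0"]) (auto simp: pd_const cC1_const)

lemma hasd_fst: "((fst :: real \<times> real \<Rightarrow> real) has_derivative (\<lambda>h. 1 * fst h + 0 * snd h)) (at p)"
  by (rule has_derivative_eq_rhs[OF has_derivative_fst[OF has_derivative_ident]]) auto
lemma hasd_snd: "((snd :: real \<times> real \<Rightarrow> real) has_derivative (\<lambda>h. 0 * fst h + 1 * snd h)) (at p)"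
  by (rule has_derivative_eq_rhs[OF has_derivative_snd[OF has_derivative_ident]]) auto

lemma pd_fst: "pd1 fst p = 1" "pd2 fst p = 0" using pd_eq[OF hasd_fst] by auto
lemma pd_snd: "pd1 snd p = 0" "pd2 snd p = 1" using pd_eq[OF hasd_snd] by auto

lemma cC2_fst: "open S \<Longrightarrow> cC2 S fst"
  by (rule cC2I[where A="\<lambda>_. 1" and B="\<lambda>_. 0"])
    (auto simp: pd_fst cC1_const intro!: cC1_intro(1)[OF _ hasd_fst] continuous_on_const)
lemma cC2_snd: "open S \<Longrightarrow> cC2 S snd"
  by (rule cC2I[where A="\<lambda>_. 0" and B="\<lambda>_. 1"])
    (auto simp: pd_snd cC1_const intro!: cC1_intro(1)[OF _ hasd_snd] continuous_on_const)

lemma hasd_add: "((F :: real \<times> real \<Rightarrow> real) has_derivative (\<lambda>h. a * fst h + b * snd h)) (at p) \<Longrightarrow>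
  (G has_derivative (\<lambda>h. c * fst h + d * snd h)) (at p) \<Longrightarrow>
  ((\<lambda>x. F x + G x) has_derivative (\<lambda>h. (a + c) * fst h + (b + d) * snd h)) (at p)"
  by (rule has_derivative_eq_rhs, rule has_derivative_add, assumption, assumption) (auto simp: algebra_simps fun_eq_iff)

lemma hasd_diff: "((F :: real \<times> real \<Rightarrow> real) has_derivative (\<lambda>h. a * fst h + b * snd h)) (at p) \<Longrightarrow>
  (G has_derivative (\<lambda>h. c * fst h + d * snd h)) (at p) \<Longrightarrow>
  ((\<lambda>x. F x - G x) has_derivative (\<lambda>h. (a - c) * fst h + (b - d) * snd h)) (at p)"
  by (rule has_derivative_eq_rhs, rule has_derivative_diff, assumption, assumption) (auto simp: algebra_simps fun_eq_iff)

lemma hasd_mult: "((F :: real \<times> real \<Rightarrow> real) has_derivative (\<lambda>h. a * fst h + b * snd h)) (at p) \<Longrightarrow>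
  (G has_derivative (\<lambda>h. c * fst h + d * snd h)) (at p) \<Longrightarrow>
  ((\<lambda>x. F x * G x) has_derivative (\<lambda>h. (a * G p + F p * c) * fst h + (b * G p + F p * d) * snd h)) (at p)"
  by (rule has_derivative_eq_rhs[OF has_derivative_mult], assumption, assumption) (auto simp: algebra_simps fun_eq_iff Lim_ident_at)

lemma cC1_add:
  assumes "open S" "cC1 S F" "cC1 S G"
  shows "cC1 S (\<lambda>x. F x + G x)" "\<And>p. p \<in> S \<Longrightarrow> pd1 (\<lambda>x. F x + G x) p = pd1 F p + pd1 G p"
    "\<And>p. p \<in> S \<Longrightarrow> pd2 (\<lambda>x. F x + G x) p = pd2 F p + pd2 G p"
proof -
  have h: "\<And>p. p \<in> S \<Longrightarrow> ((\<lambda>x. F x + G x) has_derivative (\<lambda>h. (pd1 F p + pd1 G p) * fst h + (pd2 F p + pd2 G p) * snd h)) (at p)"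
    by (rule hasd_add; rule cC1_hasd) (use assms in auto)
  have c: "continuous_on S (\<lambda>p. pd1 F p + pd1 G p)" "continuous_on S (\<lambda>p. pd2 F p + pd2 G p)"
    using assms unfolding cC1_def by (auto intro!: continuous_intros)
  show "cC1 S (\<lambda>x. F x + G x)" "\<And>p. p \<in> S \<Longrightarrow> pd1 (\<lambda>x. F x + G x) p = pd1 F p + pd1 G p"
    "\<And>p. p \<in> S \<Longrightarrow> pd2 (\<lambda>x. F x + G x) p = pd2 F p + pd2 G p"
    using cC1_intro[OF assms(1) h c] by auto
qed

lemma cC1_diff:
  assumes "open S" "cC1 S F" "cC1 S G"
  shows "cC1 S (\<lambda>x. F x - G x)" "\<And>p. p \<in> S \<Longrightarrow> pd1 (\<lambda>x. F x - G x) p = pd1 F p - pd1 G p"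
    "\<And>p. p \<in> S \<Longrightarrow> pd2 (\<lambda>x. F x - G x) p = pd2 F p - pd2 G p"
proof -
  have h: "\<And>p. p \<in> S \<Longrightarrow> ((\<lambda>x. F x - G x) has_derivative (\<lambda>h. (pd1 F p - pd1 G p) * fst h + (pd2 F p - pd2 G p) * snd h)) (at p)"
    by (rule hasd_diff; rule cC1_hasd) (use assms in auto)
  have c: "continuous_on S (\<lambda>p. pd1 F p - pd1 G p)" "continuous_on S (\<lambda>p. pd2 F p - pd2 G p)"
    using assms unfolding cC1_def by (auto intro!: continuous_intros)
  show "cC1 S (\<lambda>x. F x - G x)" "\<And>p. p \<in> S \<Longrightarrow> pd1 (\<lambda>x. F x - G x) p = pd1 F p - pd1 G p"
    "\<And>p. p \<in> S \<Longrightarrow> pd2 (\<lambda>x. F x - G x) p = pd2 F p - pd2 G p"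
    using cC1_intro[OF assms(1) h c] by auto
qed

lemma cC1_mult:
  assumes "open S" "cC1 S F" "cC1 S G"
  shows "cC1 S (\<lambda>x. F x * G x)" "\<And>p. p \<in> S \<Longrightarrow> pd1 (\<lambda>x. F x * G x) p = pd1 F p * G p + F p * pd1 G p"
    "\<And>p. p \<in> S \<Longrightarrow> pd2 (\<lambda>x. F x * G x) p = pd2 F p * G p + F p * pd2 G p"
proof -
  have h: "\<And>p. p \<in> S \<Longrightarrow> ((\<lambda>x. F x * G x) has_derivative (\<lambda>h. (pd1 F p * G p + F p * pd1 G p) * fst h + (pd2 F p * G p + F p * pd2 G p) * snd h)) (at p)"
    by (rule hasd_mult; rule cC1_hasd) (use assms in auto)
  have cF: "continuous_on S F" "continuous_on S G" using assms cC1_cont by auto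
  have c: "continuous_on S (\<lambda>p. pd1 F p * G p + F p * pd1 G p)" "continuous_on S (\<lambda>p. pd2 F p * G p + F p * pd2 G p)"
    using assms cF unfolding cC1_def by (auto intro!: continuous_intros)
  show "cC1 S (\<lambda>x. F x * G x)" "\<And>p. p \<in> S \<Longrightarrow> pd1 (\<lambda>x. F x * G x) p = pd1 F p * G p + F p * pd1 G p"
    "\<And>p. p \<in> S \<Longrightarrow> pd2 (\<lambda>x. F x * G x) p = pd2 F p * G p + F p * pd2 G p"
    using cC1_intro[OF assms(1) h c] by auto
qed

lemma cC1_comp:
  assumes S: "open S" and T: "open T" and F: "cC1 T F" and U: "cC1 S U" and W: "cC1 S W"
    and UW: "\<And>p. p \<in> S \<Longrightarrow> (U p, W p) \<in> T"
  shows "cC1 S (\<lambda>p. F (U p, W p))"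
    "\<And>p. p \<in> S \<Longrightarrow> pd1 (\<lambda>p. F (U p, W p)) p = pd1 F (U p, W p) * pd1 U p + pd2 F (U p, W p) * pd1 W p"
    "\<And>p. p \<in> S \<Longrightarrow> pd2 (\<lambda>p. F (U p, W p)) p = pd1 F (U p, W p) * pd2 U p + pd2 F (U p, W p) * pd2 W p"
proof -
  have h: "((\<lambda>p. F (U p, W p)) has_derivative (\<lambda>h. (pd1 F (U p, W p) * pd1 U p + pd2 F (U p, W p) * pd1 W p) * fst h
      + (pd1 F (U p, W p) * pd2 U p + pd2 F (U p, W p) * pd2 W p) * snd h)) (at p)" if p: "p \<in> S" for p
  proof -
    have dUW: "((\<lambda>p. (U p, W p)) has_derivative (\<lambda>h. (pd1 U p * fst h + pd2 U p * snd h, pd1 W p * fst h + pd2 W p * snd h))) (at p)"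
      by (rule has_derivative_Pair; rule cC1_hasd) (use U W p in auto)
    have dF: "(F has_derivative (\<lambda>h. pd1 F (U p, W p) * fst h + pd2 F (U p, W p) * snd h)) (at (U p, W p))"
      using cC1_hasd[OF F UW[OF p]] .
    show ?thesis
      by (rule has_derivative_eq_rhs, rule has_derivative_compose[OF dUW dF]) (auto simp: algebra_simps)
  qed
  have cU: "continuous_on S U" "continuous_on S W" using U W cC1_cont by auto
  have cUW: "continuous_on S (\<lambda>p. (U p, W p))" using cU by (intro continuous_intros)
  have im: "(\<lambda>p. (U p, W p)) ` S \<subseteq> T" using UW by auto
  have cF1: "continuous_on S (\<lambda>p. pd1 F (U p, W p))" "continuous_on S (\<lambda>p. pd2 F (U p, W p))"
    using continuous_on_compose2[OF _ cUW im] F unfolding cC1_def by auto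
  have c: "continuous_on S (\<lambda>p. pd1 F (U p, W p) * pd1 U p + pd2 F (U p, W p) * pd1 W p)"
    "continuous_on S (\<lambda>p. pd1 F (U p, W p) * pd2 U p + pd2 F (U p, W p) * pd2 W p)"
    using cF1 U W unfolding cC1_def by (auto intro!: continuous_intros)
  show "cC1 S (\<lambda>p. F (U p, W p))"
    "\<And>p. p \<in> S \<Longrightarrow> pd1 (\<lambda>p. F (U p, W p)) p = pd1 F (U p, W p) * pd1 U p + pd2 F (U p, W p) * pd1 W p"
    "\<And>p. p \<in> S \<Longrightarrow> pd2 (\<lambda>p. F (U p, W p)) p = pd1 F (U p, W p) * pd2 U p + pd2 F (U p, W p) * pd2 W p"
    using cC1_intro[OF S h c] by auto
qed

lemma cC2_add:
  assumes "open S" "cC2 S F" "cC2 S G"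
  shows "cC2 S (\<lambda>x. F x + G x)"
proof -
  have "cC1 S (\<lambda>p. pd1 F p + pd1 G p)" "cC1 S (\<lambda>p. pd2 F p + pd2 G p)"
    using assms cC1_add unfolding cC2_def by auto
  moreover have "cC1 S F" "cC1 S G" using assms unfolding cC2_def by auto
  ultimately show ?thesis
    using cC2I[OF assms(1) cC1_add(1)[OF assms(1)]] cC1_add(2,3)[OF assms(1)] by blast
qed

lemma cC2_diff:
  assumes "open S" "cC2 S F" "cC2 S G"
  shows "cC2 S (\<lambda>x. F x - G x)"
proof -
  have "cC1 S (\<lambda>p. pd1 F p - pd1 G p)" "cC1 S (\<lambda>p. pd2 F p - pd2 G p)"
    using assms cC1_diff unfolding cC2_def by auto
  moreover have "cC1 S F" "cC1 S G" using assms unfolding cC2_def by auto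
  ultimately show ?thesis
    using cC2I[OF assms(1) cC1_diff(1)[OF assms(1)]] cC1_diff(2,3)[OF assms(1)] by blast
qed

lemma cC2_mult:
  assumes "open S" "cC2 S F" "cC2 S G"
  shows "cC2 S (\<lambda>x. F x * G x)"
proof -
  have F: "cC1 S F" "cC1 S (pd1 F)" "cC1 S (pd2 F)" and G: "cC1 S G" "cC1 S (pd1 G)" "cC1 S (pd2 G)"
    using assms unfolding cC2_def by auto
  have "cC1 S (\<lambda>p. pd1 F p * G p + F p * pd1 G p)" "cC1 S (\<lambda>p. pd2 F p * G p + F p * pd2 G p)"
    by (intro cC1_add cC1_mult F G assms(1))+
  then show ?thesis
    using cC2I[OF assms(1) cC1_mult(1)[OF assms(1) F(1) G(1)]] cC1_mult(2,3)[OF assms(1) F(1) G(1)] by blast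
qed

lemma cC2_comp:
  assumes S: "open S" and T: "open T" and F: "cC2 T F" and U: "cC2 S U" and W: "cC2 S W"
    and UW: "\<And>p. p \<in> S \<Longrightarrow> (U p, W p) \<in> T"
  shows "cC2 S (\<lambda>p. F (U p, W p))"
proof -
  have F': "cC1 T F" "cC1 T (pd1 F)" "cC1 T (pd2 F)" and U': "cC1 S U" "cC1 S (pd1 U)" "cC1 S (pd2 U)"
    and W': "cC1 S W" "cC1 S (pd1 W)" "cC1 S (pd2 W)"
    using F U W unfolding cC2_def by auto
  have a: "cC1 S (\<lambda>p. pd1 F (U p, W p))" "cC1 S (\<lambda>p. pd2 F (U p, W p))"
    using cC1_comp(1)[OF S T F'(2) U'(1) W'(1) UW] cC1_comp(1)[OF S T F'(3) U'(1) W'(1) UW] by auto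
  have "cC1 S (\<lambda>p. pd1 F (U p, W p) * pd1 U p + pd2 F (U p, W p) * pd1 W p)"
       "cC1 S (\<lambda>p. pd1 F (U p, W p) * pd2 U p + pd2 F (U p, W p) * pd2 W p)"
    by (intro cC1_add cC1_mult a U' W' S)+
  then show ?thesis
    using cC2I[OF S cC1_comp(1)[OF S T F'(1) U'(1) W'(1) UW]] cC1_comp(2,3)[OF S T F'(1) U'(1) W'(1) UW] by blast
qed

lemma cC1_1d:
  assumes T: "open T" and d: "\<And>x. x \<in> T \<Longrightarrow> (\<phi> has_real_derivative \<phi>1 x) (at x)"
    and c: "continuous_on T \<phi>1"
  shows "cC1 (T \<times> UNIV) (\<lambda>q. \<phi> (fst q))" "\<And>q. q \<in> T \<times> UNIV \<Longrightarrow> pd1 (\<lambda>q. \<phi> (fst q)) q = \<phi>1 (fst q)"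
    "\<And>q. q \<in> T \<times> UNIV \<Longrightarrow> pd2 (\<lambda>q. \<phi> (fst q)) q = 0"
proof -
  have h: "((\<lambda>q. \<phi> (fst q)) has_derivative (\<lambda>h. \<phi>1 (fst q) * fst h + 0 * snd h)) (at q)" if "q \<in> T \<times> UNIV" for q
  proof -
    have "(\<phi> has_derivative (\<lambda>h. \<phi>1 (fst q) * h)) (at (fst q))"
      using d[of "fst q"] that by (auto simp: has_field_derivative_def)
    from has_derivative_compose[OF has_derivative_fst[OF has_derivative_ident] this]
    show ?thesis by (simp add: mult.commute)
  qed
  have c1: "continuous_on (T \<times> UNIV) (\<lambda>q. \<phi>1 (fst q))"
    by (rule continuous_on_compose2[OF c]) (auto intro!: continuous_intros)
  show "cC1 (T \<times> UNIV) (\<lambda>q. \<phi> (fst q))" "\<And>q. q \<in> T \<times> UNIV \<Longrightarrow> pd1 (\<lambda>q. \<phi> (fst q)) q = \<phi>1 (fst q)"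
    "\<And>q. q \<in> T \<times> UNIV \<Longrightarrow> pd2 (\<lambda>q. \<phi> (fst q)) q = 0"
    using cC1_intro[OF open_Times[OF T open_UNIV] h c1 continuous_on_const] by auto
qed

lemma cC2_1d:
  assumes T: "open T" and d: "\<And>x. x \<in> T \<Longrightarrow> (\<phi> has_real_derivative \<phi>1 x) (at x)"
    and d1: "\<And>x. x \<in> T \<Longrightarrow> (\<phi>1 has_real_derivative \<phi>2 x) (at x)"
    and c: "continuous_on T \<phi>2"
  shows "cC2 (T \<times> UNIV) (\<lambda>q. \<phi> (fst q))"
proof -
  have c1: "continuous_on T \<phi>1"
    using d1 by (meson DERIV_isCont continuous_at_imp_continuous_on)
  note A = cC1_1d[OF T d c1]
  note B = cC1_1d[OF T d1 c]
  have o: "open (T \<times> (UNIV::real set))" using T by (simp add: open_Times)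
  show ?thesis
    by (rule cC2I[OF o A(1) B(1) cC1_const[OF o, of 0]]) (use A(2,3) in auto)
qed

lemma cC2_comp1:
  assumes S: "open S" and T: "open T" and d: "\<And>x. x \<in> T \<Longrightarrow> (\<phi> has_real_derivative \<phi>1 x) (at x)"
    and d1: "\<And>x. x \<in> T \<Longrightarrow> (\<phi>1 has_real_derivative \<phi>2 x) (at x)"
    and c: "continuous_on T \<phi>2" and U: "cC2 S U" and UT: "\<And>p. p \<in> S \<Longrightarrow> U p \<in> T"
  shows "cC2 S (\<lambda>p. \<phi> (U p))"
  using cC2_comp[OF S open_Times[OF T open_UNIV] cC2_1d[OF T d d1 c] U U] UT by auto

lemma cC2_pow2: "open S \<Longrightarrow> cC2 S F \<Longrightarrow> cC2 S (\<lambda>p. F p ^ 2)"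
  using cC2_mult[of S F F] by (simp add: power2_eq_square)

lemma cC2_cmult: "open S \<Longrightarrow> cC2 S F \<Longrightarrow> cC2 S (\<lambda>p. c * F p)"
  using cC2_mult[OF _ cC2_const] by blast

lemma cC2_uminus: "open S \<Longrightarrow> cC2 S F \<Longrightarrow> cC2 S (\<lambda>p. - F p)"
  using cC2_diff[of S "\<lambda>_. 0" F] cC2_const[of S 0] by simp

lemma d_inv1: "0 < x \<Longrightarrow> ((\<lambda>x::real. 1 / x) has_real_derivative (- 1 / x^2)) (at x)"
  by (auto intro!: derivative_eq_intros simp: field_simps power2_eq_square)
lemma d_inv2: "0 < x \<Longrightarrow> ((\<lambda>x::real. - 1 / x^2) has_real_derivative (2 / x^3)) (at x)"
  by (auto intro!: derivative_eq_intros simp: field_simps power2_eq_square power3_eq_cube)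

lemma cC2_inv:
  assumes "open S" "cC2 S F" "\<And>p. p \<in> S \<Longrightarrow> F p > 0"
  shows "cC2 S (\<lambda>p. 1 / F p)"
  by (rule cC2_comp1[OF assms(1) open_greaterThan d_inv1 d_inv2 _ assms(2)])
     (use assms(3) in \<open>auto intro!: continuous_intros\<close>)

lemma cC2_divide:
  assumes "open S" "cC2 S F" "cC2 S G" "\<And>p. p \<in> S \<Longrightarrow> G p > 0"
  shows "cC2 S (\<lambda>p. F p / G p)"
  using cC2_mult[OF assms(1) assms(2) cC2_inv[OF assms(1) assms(3,4)]] by simp

lemma d_sqrt1: "0 < x \<Longrightarrow> (sqrt has_real_derivative (1 / (2 * sqrt x))) (at x)"
  by (auto intro!: derivative_eq_intros simp: field_simps)
lemma d_sqrt2: "0 < x \<Longrightarrow> ((\<lambda>x. 1 / (2 * sqrt x)) has_real_derivative (- 1 / (4 * x * sqrt x))) (at x)"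
  by (auto intro!: derivative_eq_intros simp: field_simps)

lemma cC2_sqrt:
  assumes "open S" "cC2 S F" "\<And>p. p \<in> S \<Longrightarrow> F p > 0"
  shows "cC2 S (\<lambda>p. sqrt (F p))"
  by (rule cC2_comp1[OF assms(1) open_greaterThan d_sqrt1 d_sqrt2 _ assms(2)])
     (use assms(3) in \<open>auto intro!: continuous_intros\<close>)

lemma d_cos1: "(cos has_real_derivative (- sin x)) (at x)"
  by (auto intro!: derivative_eq_intros)
lemma d_cos2: "((\<lambda>x. - sin x) has_real_derivative (- cos x)) (at x)"
  by (auto intro!: derivative_eq_intros)
lemma d_sin1: "(sin has_real_derivative (cos x)) (at x)"
  by (auto intro!: derivative_eq_intros)
lemma d_sin2: "(cos has_real_derivative (- sin x)) (at x)"
  by (auto intro!: derivative_eq_intros)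

lemma cC2_cos:
  assumes "open S" "cC2 S F"
  shows "cC2 S (\<lambda>p. cos (F p))"
  by (rule cC2_comp1[OF assms(1) open_UNIV d_cos1 d_cos2 _ assms(2)])
     (auto intro!: continuous_intros)

lemma cC2_sin:
  assumes "open S" "cC2 S F"
  shows "cC2 S (\<lambda>p. sin (F p))"
  by (rule cC2_comp1[OF assms(1) open_UNIV d_sin1 d_sin2 _ assms(2)])
     (auto intro!: continuous_intros)

definition S0 :: "(real \<times> real) set" where "S0 = UNIV \<times> {0<..}"

lemma open_S0: "open S0" unfolding S0_def by (intro open_Times) auto

definition sfun :: "real \<Rightarrow> real \<times> real \<Rightarrow> real" where
  "sfun e p = sqrt (1 + 8 * e * snd p * (cos (fst p))^2)"
definition bf :: "real \<Rightarrow> real \<times> real \<Rightarrow> real" where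
  "bf e p = sqrt (sfun e p + 1) / (2 * sfun e p)"
definition Xf :: "real \<Rightarrow> real \<times> real \<Rightarrow> real" where
  "Xf e p = 2 * cos (fst p) * sqrt (snd p) / sqrt (1 + sfun e p)"
definition Vf :: "real \<Rightarrow> real \<times> real \<Rightarrow> real" where
  "Vf e p = sqrt (2 * snd p) * sin (fst p)"

lemma sfun_ge1: "e > 0 \<Longrightarrow> snd p \<ge> 0 \<Longrightarrow> sfun e p \<ge> 1"
  unfolding sfun_def by auto

lemma sfun_pos: "e > 0 \<Longrightarrow> p \<in> S0 \<Longrightarrow> sfun e p > 0"
  using sfun_ge1[of e p] unfolding S0_def by force

lemma sfun_ge1': "e > 0 \<Longrightarrow> p \<in> S0 \<Longrightarrow> sfun e p \<ge> 1"
  using sfun_ge1[of e p] unfolding S0_def by force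

lemma bf_pos: "e > 0 \<Longrightarrow> p \<in> S0 \<Longrightarrow> bf e p > 0"
  using sfun_pos[of e p] unfolding bf_def by auto

lemma cC2_sfun: "e > 0 \<Longrightarrow> cC2 S0 (sfun e)"
proof -
  assume e: "e > 0"
  have "cC2 S0 (\<lambda>p. sqrt (1 + 8 * e * snd p * (cos (fst p))^2))"
  proof (rule cC2_sqrt[OF open_S0])
    show "cC2 S0 (\<lambda>p. 1 + 8 * e * snd p * (cos (fst p))\<^sup>2)"
      by (intro cC2_add cC2_mult cC2_pow2 cC2_cos cC2_const cC2_fst cC2_snd open_S0)
    show "0 < 1 + 8 * e * snd p * (cos (fst p))\<^sup>2" if "p \<in> S0" for p
      using that e unfolding S0_def by (auto intro!: add_pos_nonneg)
  qed
  then show ?thesis unfolding sfun_def[abs_def] .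
qed

lemma cC2_bf: "e > 0 \<Longrightarrow> cC2 S0 (bf e)"
proof -
  assume e: "e > 0"
  have "cC2 S0 (\<lambda>p. sqrt (sfun e p + 1) / (2 * sfun e p))"
    by (intro cC2_divide cC2_sqrt cC2_add cC2_mult cC2_const cC2_sfun open_S0 e)
       (use sfun_ge1'[OF e] in force)+
  then show ?thesis unfolding bf_def[abs_def] .
qed

lemma cC2_Xf: "e > 0 \<Longrightarrow> cC2 S0 (Xf e)"
proof -
  assume e: "e > 0"
  have pos: "\<And>p. p \<in> S0 \<Longrightarrow> 0 < 1 + sfun e p" using sfun_ge1'[OF e] by force
  have "cC2 S0 (\<lambda>p. 2 * cos (fst p) * sqrt (snd p) / sqrt (1 + sfun e p))"
    by (intro cC2_divide cC2_sqrt cC2_add cC2_mult cC2_const cC2_sfun cC2_cos cC2_fst cC2_snd open_S0 e)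
       (auto simp: S0_def pos)
  then show ?thesis unfolding Xf_def[abs_def] .
qed

lemma cC2_Vf: "e > 0 \<Longrightarrow> cC2 S0 (Vf e)"
proof -
  assume e: "e > 0"
  have "cC2 S0 (\<lambda>p. sqrt (2 * snd p) * sin (fst p))"
    by (intro cC2_sqrt cC2_mult cC2_const cC2_sin cC2_fst cC2_snd open_S0)
       (auto simp: S0_def)
  then show ?thesis unfolding Vf_def[abs_def] .
qed

lemma sin_shift_int: "sin (x + 2 * pi * of_int m) = sin x"
  by (simp add: sin_add)
lemma cos_shift_int: "cos (x + 2 * pi * of_int m) = cos x"
  by (simp add: cos_add)

lemma arcsin_sin_pos:
  assumes "cos x > 0"
  shows "\<exists>m::int. arcsin (sin x) = x + 2 * pi * of_int m"
proof -
  define n where "n = \<lfloor>(x + pi) / (2 * pi)\<rfloor>"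
  define y where "y = x + 2 * pi * of_int (- n)"
  have "of_int n \<le> (x + pi) / (2 * pi)" "(x + pi) / (2 * pi) < of_int n + 1"
    unfolding n_def by linarith+
  then have b: "- pi \<le> y" "y < pi" unfolding y_def by (auto simp: field_simps)
  have cy: "cos y > 0" "sin y = sin x" unfolding y_def using assms
    by (simp_all only: cos_shift_int sin_shift_int)
  have y1: "y < pi / 2"
  proof (rule ccontr)
    assume "\<not> y < pi / 2"
    then have "cos y \<le> cos (pi / 2)" using b by (intro cos_monotone_0_pi_le) auto
    then show False using cy by simp
  qed
  have y2: "- (pi / 2) < y"
  proof (rule ccontr)
    assume "\<not> - (pi / 2) < y"
    then have "cos y \<le> cos (- (pi / 2))" using b by (intro cos_monotone_minus_pi_0') auto
    then show False using cy by simp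
  qed
  have "arcsin (sin x) = y" using arcsin_sin[of y] y1 y2 cy by simp
  then show ?thesis unfolding y_def by blast
qed

lemma arcsin_sin_neg:
  assumes "cos x \<le> 0"
  shows "\<exists>m::int. pi - arcsin (sin x) = x + 2 * pi * of_int m"
proof -
  define n where "n = \<lfloor>x / (2 * pi)\<rfloor>"
  define y where "y = x + 2 * pi * of_int (- n)"
  have "of_int n \<le> x / (2 * pi)" "x / (2 * pi) < of_int n + 1"
    unfolding n_def by linarith+
  then have b: "0 \<le> y" "y < 2 * pi" unfolding y_def by (auto simp: field_simps)
  have cy: "cos y \<le> 0" "sin y = sin x" unfolding y_def using assms
    by (simp_all only: cos_shift_int sin_shift_int)
  have y1: "pi / 2 \<le> y"
  proof (rule ccontr)
    assume "\<not> pi / 2 \<le> y"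
    then have "cos y > 0" using b by (intro cos_gt_zero_pi) auto
    then show False using cy by simp
  qed
  have y2: "y \<le> 3 * pi / 2"
  proof (rule ccontr)
    assume "\<not> y \<le> 3 * pi / 2"
    then have "cos (y - 2 * pi) > 0" using b by (intro cos_gt_zero_pi) auto
    moreover have "cos (y - 2 * pi) = cos y" by (simp add: cos_diff)
    ultimately show False using cy by simp
  qed
  have "sin (pi - y) = sin y" by simp
  then have "arcsin (sin y) = pi - y" using arcsin_sin[of "pi - y"] y1 y2 by simp
  then have "pi - arcsin (sin x) = y" using cy by simp
  then show ?thesis unfolding y_def by blast
qed

lemma Phi_nonneg: "e > 0 \<Longrightarrow> Phi e x \<ge> 0"
  unfolding Phi_def by (auto intro!: add_nonneg_nonneg)

lemma Phi_pos: "e > 0 \<Longrightarrow> x \<noteq> 0 \<Longrightarrow> Phi e x > 0"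
  unfolding Phi_def by (auto intro!: add_pos_nonneg)

lemma Ham_pos: "e > 0 \<Longrightarrow> (x, v) \<noteq> (0, 0) \<Longrightarrow> Ham e x v > 0"
  unfolding Ham_def using Phi_nonneg[of e x] Phi_pos[of e x]
  by (cases "x = 0") (auto intro: add_pos_nonneg add_nonneg_pos)

lemma sfun_sq: "e > 0 \<Longrightarrow> k > 0 \<Longrightarrow> (sfun e (c, k))^2 = 1 + 8 * e * k * (cos c)^2"
  unfolding sfun_def by (simp add: add_nonneg_nonneg)

lemma Xf_sq:
  assumes e: "e > 0" and k: "k > 0"
  shows "(Xf e (c, k))^2 = (sfun e (c, k) - 1) / (2 * e)"
proof -
  let ?s = "sfun e (c, k)"
  have s1: "?s \<ge> 1" using sfun_ge1[of e "(c,k)"] e k by auto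
  have ss: "?s^2 = 1 + 8 * e * k * (cos c)^2" using sfun_sq[OF e k] .
  have "(Xf e (c, k))^2 = 4 * (cos c)^2 * k / (1 + ?s)"
    unfolding Xf_def using k s1 by (simp add: power_divide power_mult_distrib)
  also have "\<dots> = (2 * e * (4 * (cos c)^2 * k)) / (2 * e * (1 + ?s))"
    by (rule mult_divide_mult_cancel_left[symmetric]) (use e in simp)
  also have "\<dots> = (8 * e * k * (cos c)^2) / (2 * e * (1 + ?s))" by (simp add: algebra_simps)
  also have "\<dots> = (?s^2 - 1) / (2 * e * (1 + ?s))" using ss by simp
  also have "\<dots> = ((1 + ?s) * (?s - 1)) / ((1 + ?s) * (2 * e))"
    by (simp add: algebra_simps power2_eq_square)
  also have "\<dots> = (?s - 1) / (2 * e)"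
    by (rule mult_divide_mult_cancel_left) (use s1 in simp)
  finally show ?thesis .
qed

lemma Ham_XV:
  assumes e: "e > 0" and k: "k > 0"
  shows "Ham e (Xf e (c, k)) (Vf e (c, k)) = k"
proof -
  let ?s = "sfun e (c, k)"
  have s1: "?s \<ge> 1" using sfun_ge1[of e "(c,k)"] e k by auto
  have ss: "?s^2 = 1 + 8 * e * k * (cos c)^2" using sfun_sq[OF e k] .
  have X2: "(Xf e (c, k))^2 = (?s - 1) / (2 * e)" using Xf_sq[OF e k] .
  have X4: "(Xf e (c, k))^4 = ((?s - 1) / (2 * e))^2"
    using X2 by (metis power2_eq_square power4_eq_xxxx mult.assoc)
  have "Phi e (Xf e (c, k)) = ((?s - 1) / (2 * e)) / 2 + e * ((?s - 1) / (2 * e))^2 / 2"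
    unfolding Phi_def X2 X4 ..
  also have "\<dots> = (?s^2 - 1) / (8 * e)" using e by (simp add: field_simps power2_eq_square)
  also have "\<dots> = k * (cos c)^2" using ss e by (simp add: field_simps)
  finally have P: "Phi e (Xf e (c, k)) = k * (cos c)^2" .
  have V: "(Vf e (c, k))^2 / 2 = k * (sin c)^2"
    unfolding Vf_def using k by (simp add: power_mult_distrib)
  show ?thesis
    unfolding Ham_def P V by (metis distrib_left mult.right_neutral sin_cos_squared_add)
qed

lemma Xf_pos_iff:
  assumes e: "e > 0" and k: "k > 0"
  shows "Xf e (c, k) > 0 \<longleftrightarrow> cos c > 0"
proof -
  have "2 * sqrt k / sqrt (1 + sfun e (c, k)) > 0"
    using k sfun_ge1[of e "(c,k)"] e by auto
  moreover have "Xf e (c, k) = cos c * (2 * sqrt k / sqrt (1 + sfun e (c, k)))"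
    unfolding Xf_def by simp
  ultimately show ?thesis using zero_less_mult_iff[of "cos c" "2 * sqrt k / sqrt (1 + sfun e (c, k))"]
    by auto
qed

lemma XV_nonzero:
  assumes e: "e > 0" and k: "k > 0"
  shows "(Xf e (c, k), Vf e (c, k)) \<noteq> (0, 0)"
proof
  assume h: "(Xf e (c, k), Vf e (c, k)) = (0, 0)"
  then have "Vf e (c, k) = 0" by simp
  then have "sin c = 0" unfolding Vf_def using k by simp
  moreover have "Xf e (c, k) = 0" using h by simp
  then have "cos c = 0" unfolding Xf_def using k sfun_ge1[of e "(c,k)"] e
    by (auto simp: add_pos_nonneg)
  ultimately show False using sin_cos_squared_add[of c] by simp
qed

lemma chi_XV:
  assumes e: "e > 0" and k: "k > 0"
  shows "\<exists>m::int. chi e (Xf e (c, k)) (Vf e (c, k)) = c + 2 * pi * of_int m"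
proof -
  have H: "Ham e (Xf e (c, k)) (Vf e (c, k)) = k" using Ham_XV[OF e k] .
  have u: "Vf e (c, k) / sqrt (2 * k) = sin c"
    unfolding Vf_def using k by simp
  show ?thesis
  proof (cases "cos c > 0")
    case True
    then have "Xf e (c, k) > 0" using Xf_pos_iff[OF e k] by simp
    then have "chi e (Xf e (c, k)) (Vf e (c, k)) = arcsin (sin c)"
      unfolding chi_def H u by simp
    then show ?thesis using arcsin_sin_pos[OF True] by simp
  next
    case False
    then have "\<not> Xf e (c, k) > 0" using Xf_pos_iff[OF e k] by simp
    then have "chi e (Xf e (c, k)) (Vf e (c, k)) = pi - arcsin (sin c)"
      unfolding chi_def H u by simp
    then show ?thesis using arcsin_sin_neg[of c] False by simp
  qed
qed

lemma Xf_shift: "Xf e (c + 2 * pi * of_int m, k) = Xf e (c, k)"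
  unfolding Xf_def sfun_def by (simp only: fst_conv snd_conv cos_shift_int)
lemma Vf_shift: "Vf e (c + 2 * pi * of_int m, k) = Vf e (c, k)"
  unfolding Vf_def by (simp only: fst_conv snd_conv sin_shift_int)
lemma bf_shift: "bf e (c + 2 * pi * of_int m, k) = bf e (c, k)"
  unfolding bf_def sfun_def by (simp only: fst_conv snd_conv cos_shift_int)

lemma Xf_inverse:
  assumes e: "e > 0" and nz: "(x, v) \<noteq> (0, 0)"
  shows "Xf e (chi e x v, Ham e x v) = x"
proof -
  define H where "H = Ham e x v"
  have H0: "H > 0" unfolding H_def using Ham_pos[OF e nz] .
  define u where "u = v / sqrt (2 * H)"
  have P0: "Phi e x \<ge> 0" using Phi_nonneg[OF e] .
  have u2: "u^2 = v^2 / (2 * H)" unfolding u_def using H0 by (simp add: power_divide)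
  have vH: "v^2 \<le> 2 * H" unfolding H_def Ham_def using P0 by simp
  have u2le: "u^2 \<le> 1" using u2 vH H0 by (simp add: divide_le_eq)
  then have ub: "-1 \<le> u" "u \<le> 1" by (auto simp: abs_le_iff power2_le_iff_abs_le[symmetric] abs_square_le_1)
  have hv: "2 * H - v^2 = 2 * Phi e x" unfolding H_def Ham_def by simp
  have "1 - u^2 = (2 * H - v^2) / (2 * H)" unfolding u2 using H0 by (simp add: field_simps)
  then have 1: "1 - u^2 = Phi e x / H" unfolding hv by simp
  define th where "th = chi e x v"
  have th_def': "th = (if x > 0 then arcsin u else pi - arcsin u)"
    unfolding th_def chi_def u_def H_def by simp
  have costh: "cos th = (if x > 0 then sqrt (1 - u^2) else - sqrt (1 - u^2))"
    unfolding th_def' using cos_arcsin[OF ub] by simp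
  have nn: "0 \<le> 1 - u^2" using u2le by simp
  have "(cos th)^2 = 1 - u^2" by (metis costh real_sqrt_pow2[OF nn] power2_minus)
  then have cos2: "(cos th)^2 = Phi e x / H" using 1 by simp
  have s: "sfun e (th, H) = 1 + 2 * e * x^2"
  proof -
    have "1 + 8 * e * H * (cos th)^2 = 1 + 8 * e * Phi e x" using cos2 H0 by simp
    also have "\<dots> = (1 + 2 * e * x^2)^2" unfolding Phi_def by (simp add: power2_eq_square field_simps power4_eq_xxxx)
    finally show ?thesis unfolding sfun_def using e
      by (simp add: add_nonneg_nonneg)
  qed
  have Xsq: "(Xf e (th, H))^2 = x^2"
  proof -
    have "(Xf e (th, H))^2 = 4 * (cos th)^2 * H / (2 + 2 * e * x^2)"
      unfolding Xf_def s using H0 e by (simp add: power_divide power_mult_distrib add_nonneg_nonneg)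
    also have "\<dots> = 4 * Phi e x / (2 + 2 * e * x^2)" using cos2 H0 by simp
    also have "\<dots> = x^2 * (2 + 2 * e * x^2) / (2 + 2 * e * x^2)"
      unfolding Phi_def by (simp add: algebra_simps power2_eq_square power4_eq_xxxx)
    also have "\<dots> = x^2"
    proof -
      have "2 + 2 * e * x^2 > 0" using e by (simp add: add_pos_nonneg)
      then show ?thesis by simp
    qed
    finally show ?thesis .
  qed
  have den: "2 * sqrt H / sqrt (1 + sfun e (th, H)) > 0"
    using H0 s e by (simp add: add_pos_nonneg)
  have XfE: "Xf e (th, H) = cos th * (2 * sqrt H / sqrt (1 + sfun e (th, H)))"
    unfolding Xf_def by simp
  show ?thesis
  proof (cases "x > 0")
    case True
    then have "cos th \<ge> 0" using costh real_sqrt_ge_zero[OF nn] by simp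
    then have "Xf e (th, H) \<ge> 0" unfolding XfE using den by (intro mult_nonneg_nonneg) auto
    from power2_eq_imp_eq[OF Xsq this] True have "Xf e (th, H) = x" by simp
    then show ?thesis unfolding th_def H_def .
  next
    case False
    then have "cos th \<le> 0" using costh real_sqrt_ge_zero[OF nn] by simp
    then have "Xf e (th, H) \<le> 0" unfolding XfE using den by (intro mult_nonpos_nonneg) auto
    moreover have "(- Xf e (th, H))^2 = (- x)^2" using Xsq by simp
    ultimately have "- Xf e (th, H) = - x" using False power2_eq_imp_eq[of "- Xf e (th, H)" "- x"]
      by auto
    then show ?thesis unfolding th_def H_def by simp
  qed
qed

lemma xco_eq:
  assumes e: "e > 0" and k: "k > 0"
  shows "xco e c k = Xf e (c, k)"
  unfolding xco_def
proof (rule the_equality)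
  show "\<exists>v. (Xf e (c, k), v) \<noteq> (0, 0) \<and> Ham e (Xf e (c, k)) v = k \<and>
      (\<exists>m::int. chi e (Xf e (c, k)) v = c + 2 * pi * of_int m)"
  proof -
    obtain m :: int where "chi e (Xf e (c, k)) (Vf e (c, k)) = c + 2 * pi * of_int m"
      using chi_XV[OF e k] by blast
    then show ?thesis using XV_nonzero[OF e k] Ham_XV[OF e k] by blast
  qed
next
  fix x assume "\<exists>v. (x, v) \<noteq> (0, 0) \<and> Ham e x v = k \<and> (\<exists>m::int. chi e x v = c + 2 * pi * of_int m)"
  then obtain v m where h: "(x, v) \<noteq> (0, 0)" "Ham e x v = k" "chi e x v = c + 2 * pi * of_int (m::int)"
    by blast
  have "x = Xf e (chi e x v, Ham e x v)" using Xf_inverse[OF e h(1)] by simp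
  also have "\<dots> = Xf e (c, k)" unfolding h(2,3) Xf_shift ..
  finally show "x = Xf e (c, k)" .
qed

lemma inv_acoef:
  assumes e: "e > 0" and k: "k > 0"
  shows "1 / acoef e c k = bf e (c, k)"
proof -
  let ?s = "sfun e (c, k)"
  have s1: "?s \<ge> 1" using sfun_ge1[of e "(c,k)"] e k by auto
  have X2: "(xco e c k)^2 = (?s - 1) / (2 * e)" using Xf_sq[OF e k] xco_eq[OF e k] by simp
  have a: "1 + 2 * e * (xco e c k)^2 = ?s" using X2 e by simp
  have b: "1 + e * (xco e c k)^2 = (1 + ?s) / 2" using X2 e by (simp add: field_simps)
  have "1 / acoef e c k = sqrt ((1 + ?s) / 2) / (sqrt 2 * ?s)"
    unfolding acoef_def a b by simp
  also have "\<dots> = sqrt (1 + ?s) / (2 * ?s)"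
    by (simp add: real_sqrt_divide field_simps)
  finally show ?thesis unfolding bf_def by (simp add: add.commute)
qed

definition Intg :: "(real \<times> real \<Rightarrow> real) \<Rightarrow> real \<times> real \<Rightarrow> real" where
  "Intg h p = (LBINT t = 0..fst p. h (t, snd p))"

lemma slice_cont:
  assumes "continuous_on S0 h" "k > 0"
  shows "continuous_on A (\<lambda>t. h (t, k))"
  by (rule continuous_on_compose2[OF assms(1)]) (use assms(2) in \<open>auto simp: S0_def intro!: continuous_intros\<close>)

lemma LBINT_eq_int:
  fixes f :: "real \<Rightarrow> real"
  assumes "a \<le> b" "continuous_on {a..b} f"
  shows "(LBINT x=ereal a..ereal b. f x) = integral {a..b} f"
  using interval_integral_eq_integral[OF assms(1) borel_integrable_atLeastAtMost'[OF assms(2)]] .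

lemma LBINT_eq_int0:
  fixes f :: "real \<Rightarrow> real"
  assumes "0 \<le> b" "continuous_on {0..b} f"
  shows "(LBINT x=0..ereal b. f x) = integral {0..b} f" "(LBINT x=ereal b..0. f x) = - integral {0..b} f"
  using LBINT_eq_int[OF assms] interval_integral_endpoints_reverse[of "ereal 0" "ereal b" f]
  by (simp_all add: zero_ereal_def)

lemma LBINT_eq_int0':
  fixes f :: "real \<Rightarrow> real"
  assumes "c \<le> 0" "continuous_on {c..0} f"
  shows "(LBINT x=0..ereal c. f x) = - integral {c..0} f"
  using LBINT_eq_int[OF assms] interval_integral_endpoints_reverse[of "ereal 0" "ereal c" f]
  by (simp add: zero_ereal_def)

lemma Intg_FTC:
  assumes h: "continuous_on S0 h" and k: "k > 0"
  shows "((\<lambda>c. Intg h (c, k)) has_real_derivative h (c, k)) (at c)"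
proof -
  define L where "L = \<bar>c\<bar> + 1"
  have "((\<lambda>u. LBINT y=ereal 0..u. h (y, k)) has_vector_derivative h (c, k)) (at c within {-L..L})"
    by (rule interval_integral_FTC2[where f="\<lambda>y. h (y, k)" and a="-L" and b=L and c=0])
       (use slice_cont[OF h k] in \<open>auto simp: L_def\<close>)
  then have "((\<lambda>u. LBINT y=0..u. h (y, k)) has_vector_derivative h (c, k)) (at c within {-L..L})"
    by (simp add: zero_ereal_def)
  moreover have int: "c \<in> interior {-L..L}" unfolding L_def by auto
  ultimately have "((\<lambda>u. LBINT y=0..u. h (y, k)) has_vector_derivative h (c, k)) (at c)"
    by (simp only: at_within_interior[OF int])
  then show ?thesis unfolding Intg_def has_real_derivative_iff_has_vector_derivative by simp
qed

lemma Intg_sub: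
  assumes h: "continuous_on S0 h" and k: "k > 0"
  shows "Intg h (c, k) = c * integral {0..1} (\<lambda>u. h (c * u, k))"
proof -
  have "(LBINT u=0..1. c *\<^sub>R h (c * u, k)) = (LBINT y=(c * 0)..(c * 1). h (y, k))"
    using interval_integral_substitution_finite[of 0 1 "\<lambda>u. c * u" "\<lambda>_. c" "\<lambda>y. h (y, k)"]
    by (auto intro!: derivative_eq_intros continuous_intros slice_cont[OF h k] simp: zero_ereal_def one_ereal_def)
  then have "Intg h (c, k) = c * (LBINT u=0..1. h (c * u, k))"
    unfolding Intg_def by (simp add: zero_ereal_def)
  also have "(LBINT u=0..1. h (c * u, k)) = integral {0..1} (\<lambda>u. h (c * u, k))"
  proof -
    have cc: "continuous_on {0..1} (\<lambda>u. h (c * u, k))"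
      by (rule continuous_on_compose2[OF h]) (use k in \<open>auto simp: S0_def intro!: continuous_intros\<close>)
    show ?thesis using LBINT_eq_int[of 0 1 "\<lambda>u. h (c * u, k)", OF _ cc]
      by (simp add: zero_ereal_def one_ereal_def)
  qed
  finally show ?thesis .
qed

lemma Intg_cont:
  assumes h: "continuous_on S0 h"
  shows "continuous_on S0 (Intg h)"
proof -
  have c: "continuous_on S0 (\<lambda>p. integral (cbox 0 1) (\<lambda>u. h (fst p * u, snd p)))"
  proof (rule integral_continuous_on_param)
    have "continuous_on (S0 \<times> cbox 0 1) (\<lambda>x. h (fst (fst x) * snd x, snd (fst x)))"
      by (rule continuous_on_compose2[OF h]) (auto simp: S0_def intro!: continuous_intros)
    then show "continuous_on (S0 \<times> cbox 0 1) (\<lambda>(p, u). h (fst p * u, snd p))"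
      by (simp add: split_beta')
  qed
  have "continuous_on S0 (\<lambda>p. fst p * integral {0..1} (\<lambda>u. h (fst p * u, snd p)))"
    using c by (auto simp: cbox_interval intro!: continuous_intros)
  moreover have "\<And>p. p \<in> S0 \<Longrightarrow> fst p * integral {0..1} (\<lambda>u. h (fst p * u, snd p)) = Intg h p"
    using Intg_sub[OF h] by (auto simp: S0_def)
  ultimately show ?thesis by (rule continuous_on_eq)
qed

lemma leib_aux:
  assumes h: "cC1 S0 h" and k: "k > 0" and ab: "a \<le> b"
  shows "((\<lambda>k. integral {a..b} (\<lambda>t. h (t, k))) has_real_derivative integral {a..b} (\<lambda>t. pd2 h (t, k))) (at k)"
proof -
  have hc: "continuous_on S0 h" "continuous_on S0 (pd2 h)" using h cC1_cont[OF h] unfolding cC1_def by auto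
  have "((\<lambda>k. integral (cbox a b) (\<lambda>t. h (t, k))) has_field_derivative integral (cbox a b) (\<lambda>t. pd2 h (t, k))) (at k within {0<..})"
  proof (rule leibniz_rule_field_derivative)
    fix x :: real and t assume x: "x \<in> {0<..}" and t: "t \<in> cbox a b"
    have p: "(t, x) \<in> S0" using x by (auto simp: S0_def)
    have "((\<lambda>x. h (t, x)) has_derivative (\<lambda>d. pd1 h (t, x) * fst (0::real, d) + pd2 h (t, x) * snd (0::real, d))) (at x)"
      using has_derivative_compose[OF has_derivative_Pair[OF has_derivative_const has_derivative_ident] cC1_hasd[OF h p]]
      by simp
    then have "((\<lambda>x. h (t, x)) has_derivative (\<lambda>d. pd2 h (t, x) * d)) (at x)" by simp
    then show "((\<lambda>x. h (t, x)) has_field_derivative pd2 h (t, x)) (at x within {0<..})"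
      unfolding has_field_derivative_def by (rule has_derivative_at_withinI)
  next
    fix x :: real assume x: "x \<in> {0<..}"
    show "(\<lambda>t. h (t, x)) integrable_on cbox a b"
      unfolding cbox_interval using slice_cont[OF hc(1)] x by (auto intro!: integrable_continuous_interval)
  next
    have "continuous_on ({0<..} \<times> cbox a b) (\<lambda>x. pd2 h (snd x, fst x))"
      by (rule continuous_on_compose2[OF hc(2)]) (auto simp: S0_def intro!: continuous_intros)
    then show "continuous_on ({0<..} \<times> cbox a b) (\<lambda>(x, t). pd2 h (t, x))"
      by (simp add: split_beta')
  qed (use k in auto)
  moreover have "at k within {0<..} = at k" using k by (intro at_within_open) auto
  ultimately show ?thesis unfolding cbox_interval by simp
qed

lemma Intg_dk:
  assumes h: "cC1 S0 h" and k: "k > 0"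
  shows "((\<lambda>k. Intg h (c, k)) has_real_derivative Intg (pd2 h) (c, k)) (at k)"
proof -
  have hc: "continuous_on S0 h" "continuous_on S0 (pd2 h)" using h cC1_cont[OF h] unfolding cC1_def by auto
  have eqI: "Intg g (c, k') = (if 0 \<le> c then integral {0..c} (\<lambda>t. g (t, k')) else - integral {c..0} (\<lambda>t. g (t, k')))"
    if "continuous_on S0 g" "k' > 0" for g k'
  proof (cases "0 \<le> c")
    case True
    then show ?thesis unfolding Intg_def using LBINT_eq_int0(1)[OF True slice_cont[OF that]] by simp
  next
    case False
    then show ?thesis unfolding Intg_def using LBINT_eq_int0'[OF _ slice_cont[OF that], of c] by simp
  qed
  show ?thesis
  proof (cases "0 \<le> c")
    case True
    have "((\<lambda>k. integral {0..c} (\<lambda>t. h (t, k))) has_real_derivative Intg (pd2 h) (c, k)) (at k)"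
      using leib_aux[OF h k True] eqI[OF hc(2) k] True by simp
    then show ?thesis
      by (rule has_field_derivative_transform_within_open[where S="{0<..}"]) (use k eqI[OF hc(1)] True in auto)
  next
    case False
    have "((\<lambda>k. - integral {c..0} (\<lambda>t. h (t, k))) has_real_derivative Intg (pd2 h) (c, k)) (at k)"
      using DERIV_minus[OF leib_aux[OF h k, of c 0]] eqI[OF hc(2) k] False by simp
    then show ?thesis
      by (rule has_field_derivative_transform_within_open[where S="{0<..}"]) (use k eqI[OF hc(1)] False in auto)
  qed
qed

lemma Intg_C1:
  assumes h: "cC1 S0 h"
  shows "cC1 S0 (Intg h)" "\<And>p. p \<in> S0 \<Longrightarrow> pd1 (Intg h) p = h p"
    "\<And>p. p \<in> S0 \<Longrightarrow> pd2 (Intg h) p = Intg (pd2 h) p"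
proof -
  have hc: "continuous_on S0 h" "continuous_on S0 (pd2 h)" using h cC1_cont[OF h] unfolding cC1_def by auto
  have D: "(Intg h has_derivative (\<lambda>d. h p * fst d + Intg (pd2 h) p * snd d)) (at p)" if p: "p \<in> S0" for p
  proof -
    obtain c k where pck: "p = (c, k)" by (cases p)
    have k: "k > 0" using p pck by (auto simp: S0_def)
    have "((\<lambda>(k, c). Intg h (c, k)) has_derivative (\<lambda>(tk, tc). Intg (pd2 h) (c, k) * tk + blinfun_apply (blinfun_mult_right (h (c, k))) tc))
        (at (k, c) within {0<..} \<times> UNIV)"
    proof (rule has_derivative_partialsI[where fy="\<lambda>k c. blinfun_mult_right (h (c, k))"])
      show "((\<lambda>k. Intg h (c, k)) has_derivative (*) (Intg (pd2 h) (c, k))) (at k within {0<..})"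
        using Intg_dk[OF h k] by (auto simp: has_field_derivative_def intro: has_derivative_at_withinI)
      fix k' c' :: real assume k': "k' \<in> {0<..}"
      show "((\<lambda>c. Intg h (c, k')) has_derivative blinfun_apply (blinfun_mult_right (h (c', k')))) (at c' within UNIV)"
        using Intg_FTC[OF hc(1), of k' c'] k' by (auto simp: has_field_derivative_def)
    next
      have "continuous_on ({0<..} \<times> UNIV) (\<lambda>(k, c). blinfun_mult_right (h (c, k)))"
      proof -
        have "continuous_on ({0<..} \<times> UNIV) (\<lambda>x. h (snd x, fst x))"
          by (rule continuous_on_compose2[OF hc(1)]) (auto simp: S0_def intro!: continuous_intros)
        then have "continuous_on ({0<..} \<times> UNIV) (\<lambda>x. blinfun_mult_right (h (snd x, fst x)))"
          using continuous_on_compose2[OF linear_continuous_on[OF bounded_linear_blinfun_mult_right]]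
          by blast
        then show ?thesis by (simp add: split_beta')
      qed
      then show "continuous (at (k, c) within {0<..} \<times> UNIV) (\<lambda>(k, c). blinfun_mult_right (h (c, k)))"
        using k by (simp add: continuous_on_eq_continuous_within)
    qed (auto)
    then have d1: "((\<lambda>(k, c). Intg h (c, k)) has_derivative (\<lambda>(tk, tc). Intg (pd2 h) (c, k) * tk + h (c, k) * tc)) (at (k, c))"
      using k by (subst (asm) at_within_open) (auto intro!: open_Times)
    have "((\<lambda>p. (\<lambda>(k, c). Intg h (c, k)) (snd p, fst p)) has_derivative (\<lambda>d. (\<lambda>(tk, tc). Intg (pd2 h) (c, k) * tk + h (c, k) * tc) (snd d, fst d))) (at p)"
      by (rule has_derivative_compose[of "\<lambda>p. (snd p, fst p)" _ _ _ "\<lambda>(k, c). Intg h (c, k)"])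
         (auto intro!: derivative_eq_intros simp: pck d1)
    then show ?thesis by (simp add: pck algebra_simps)
  qed
  show "cC1 S0 (Intg h)" "\<And>p. p \<in> S0 \<Longrightarrow> pd1 (Intg h) p = h p"
    "\<And>p. p \<in> S0 \<Longrightarrow> pd2 (Intg h) p = Intg (pd2 h) p"
    using cC1_intro[OF open_S0 D hc(1) Intg_cont[OF hc(2)]] by auto
qed

lemma Intg_C2:
  assumes h: "cC2 S0 h"
  shows "cC2 S0 (Intg h)"
proof -
  have h1: "cC1 S0 h" "cC1 S0 (pd2 h)" using h unfolding cC2_def by auto
  show ?thesis
    by (rule cC2I[OF open_S0 Intg_C1(1)[OF h1(1)] h1(1) Intg_C1(1)[OF h1(2)]])
       (use Intg_C1(2,3)[OF h1(1)] in auto)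
qed

lemma line1:
  assumes "cC1 S0 F" "k > 0"
  shows "((\<lambda>c. F (c, k)) has_real_derivative pd1 F (c, k)) (at c)"
proof -
  have p: "(c, k) \<in> S0" using assms(2) by (auto simp: S0_def)
  have "((\<lambda>c. F (c, k)) has_derivative (\<lambda>d. pd1 F (c, k) * fst (d, 0::real) + pd2 F (c, k) * snd (d, 0::real))) (at c)"
    using has_derivative_compose[OF has_derivative_Pair[OF has_derivative_ident has_derivative_const] cC1_hasd[OF assms(1) p]]
    by simp
  then have "((\<lambda>c. F (c, k)) has_derivative (\<lambda>d. pd1 F (c, k) * d)) (at c)" by simp
  then show ?thesis by (simp add: has_field_derivative_def)
qed

lemma line2:
  assumes "cC1 S0 F" "k > 0"
  shows "((\<lambda>k. F (c, k)) has_real_derivative pd2 F (c, k)) (at k)"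
proof -
  have p: "(c, k) \<in> S0" using assms(2) by (auto simp: S0_def)
  have "((\<lambda>k. F (c, k)) has_derivative (\<lambda>d. pd1 F (c, k) * fst (0::real, d) + pd2 F (c, k) * snd (0::real, d))) (at k)"
    using has_derivative_compose[OF has_derivative_Pair[OF has_derivative_const has_derivative_ident] cC1_hasd[OF assms(1) p]]
    by simp
  then have "((\<lambda>k. F (c, k)) has_derivative (\<lambda>d. pd2 F (c, k) * d)) (at k)" by simp
  then show ?thesis by (simp add: has_field_derivative_def)
qed

lemma cC2_C1: "cC2 S F \<Longrightarrow> cC1 S F" unfolding cC2_def by simp

definition Ib :: "real \<Rightarrow> real \<times> real \<Rightarrow> real" where "Ib e = Intg (bf e)"
definition Cp :: "real \<Rightarrow> real \<times> real \<Rightarrow> real" where "Cp e p = 2 * pi / Ib e (2 * pi, snd p)"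
definition Qp :: "real \<Rightarrow> real \<times> real \<Rightarrow> real" where "Qp e p = Cp e p * Ib e p"

lemma cC2_Ib: "e > 0 \<Longrightarrow> cC2 S0 (Ib e)"
  unfolding Ib_def by (intro Intg_C2 cC2_bf)

lemma cont_bf: "e > 0 \<Longrightarrow> continuous_on S0 (bf e)"
  using cC1_cont cC2_C1 cC2_bf by blast

lemma Ib_d1: "e > 0 \<Longrightarrow> k > 0 \<Longrightarrow> ((\<lambda>c. Ib e (c, k)) has_real_derivative bf e (c, k)) (at c)"
  unfolding Ib_def by (rule Intg_FTC[OF cont_bf])

lemma Ib_0: "Ib e (0, k) = 0" unfolding Ib_def Intg_def by (simp add: zero_ereal_def)

lemma Ib_mono:
  assumes e: "e > 0" and k: "k > 0" and ab: "a < b"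
  shows "Ib e (a, k) < Ib e (b, k)"
proof (rule DERIV_pos_imp_increasing[OF ab])
  fix x show "\<exists>y. ((\<lambda>c. Ib e (c, k)) has_real_derivative y) (at x) \<and> 0 < y"
    using Ib_d1[OF e k] bf_pos[OF e, of "(x, k)"] k by (auto simp: S0_def)
qed

lemma Ib_2pi_pos: "e > 0 \<Longrightarrow> k > 0 \<Longrightarrow> Ib e (2 * pi, k) > 0"
  using Ib_mono[of e k 0 "2 * pi"] Ib_0[of e k] by simp

lemma Ib_per:
  assumes e: "e > 0" and k: "k > 0"
  shows "Ib e (c + 2 * pi, k) = Ib e (c, k) + Ib e (2 * pi, k)"
proof -
  have "\<forall>x. ((\<lambda>c. Ib e (c + 2 * pi, k) - Ib e (c, k)) has_real_derivative 0) (at x)"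
  proof
    fix x
    have "((\<lambda>c. Ib e (c + 2 * pi, k)) has_real_derivative bf e (x + 2 * pi, k)) (at x)"
    proof -
      have g: "((\<lambda>c. c + 2 * pi) has_real_derivative 1) (at x)" by (auto intro!: derivative_eq_intros)
      show ?thesis
        using DERIV_chain2[where f="\<lambda>c. Ib e (c, k)" and g="\<lambda>c. c + 2 * pi", OF Ib_d1[OF e k, of "x + 2 * pi"] g]
        by simp
    qed
    from DERIV_diff[OF this Ib_d1[OF e k, of x]]
    show "((\<lambda>c. Ib e (c + 2 * pi, k) - Ib e (c, k)) has_real_derivative 0) (at x)"
      using bf_shift[of e x 1 k] by simp
  qed
  from DERIV_isconst_all[OF this, of c 0]
  show ?thesis using Ib_0[of e k] by simp
qed

lemma Cfun_eq: "e > 0 \<Longrightarrow> k > 0 \<Longrightarrow> cfun e k = Cp e (c, k)"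
proof -
  assume e: "e > 0" and k: "k > 0"
  have "(\<lambda>ch. 1 / acoef e ch k) = (\<lambda>ch. bf e (ch, k))" using inv_acoef[OF e k] by auto
  then show ?thesis unfolding cfun_def Cp_def Ib_def Intg_def by simp
qed

lemma Qfun_eq: "e > 0 \<Longrightarrow> k > 0 \<Longrightarrow> Qfun e c k = Qp e (c, k)"
proof -
  assume e: "e > 0" and k: "k > 0"
  have "(\<lambda>ch. 1 / acoef e ch k) = (\<lambda>ch. bf e (ch, k))" using inv_acoef[OF e k] by auto
  then show ?thesis unfolding Qfun_def Qp_def Cfun_eq[OF e k, of c] Ib_def Intg_def by simp
qed

lemma cC2_Cp: "e > 0 \<Longrightarrow> cC2 S0 (Cp e)"
proof -
  assume e: "e > 0"
  have "cC2 S0 (\<lambda>p. 2 * pi / Ib e (2 * pi, snd p))"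
  proof (rule cC2_divide[OF open_S0 cC2_const[OF open_S0]])
    show "cC2 S0 (\<lambda>p. Ib e (2 * pi, snd p))"
      by (rule cC2_comp[OF open_S0 open_S0 cC2_Ib[OF e] cC2_const[OF open_S0] cC2_snd[OF open_S0]])
         (auto simp: S0_def)
    show "\<And>p. p \<in> S0 \<Longrightarrow> 0 < Ib e (2 * pi, snd p)" using Ib_2pi_pos[OF e] by (auto simp: S0_def)
  qed
  then show ?thesis unfolding Cp_def[abs_def] .
qed

lemma cC2_Qp: "e > 0 \<Longrightarrow> cC2 S0 (Qp e)"
  unfolding Qp_def[abs_def] by (intro cC2_mult cC2_Cp cC2_Ib open_S0)

lemma Cp_pos: "e > 0 \<Longrightarrow> k > 0 \<Longrightarrow> Cp e (c, k) > 0"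
proof -
  assume e: "e > 0" and k: "k > 0"
  have "Ib e (2 * pi, k) > 0" by (rule Ib_2pi_pos[OF e k])
  then show ?thesis unfolding Cp_def by simp
qed

lemma Qp_d1: "e > 0 \<Longrightarrow> k > 0 \<Longrightarrow> ((\<lambda>c. Qp e (c, k)) has_real_derivative Cp e (c, k) * bf e (c, k)) (at c)"
proof -
  assume e: "e > 0" and k: "k > 0"
  have "((\<lambda>c. Cp e (0, k) * Ib e (c, k)) has_real_derivative Cp e (0, k) * bf e (c, k)) (at c)"
    by (intro DERIV_cmult Ib_d1[OF e k])
  moreover have "(\<lambda>c. Qp e (c, k)) = (\<lambda>c. Cp e (0, k) * Ib e (c, k))" by (simp add: Qp_def Cp_def)
  moreover have "Cp e (c, k) = Cp e (0, k)" by (simp add: Cp_def)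
  ultimately show ?thesis by simp
qed

lemma pd1_Qp: "e > 0 \<Longrightarrow> k > 0 \<Longrightarrow> pd1 (Qp e) (c, k) = Cp e (c, k) * bf e (c, k)"
  by (rule DERIV_unique[OF line1[OF cC2_C1[OF cC2_Qp]] Qp_d1])

lemma pd1_Qp_pos: "e > 0 \<Longrightarrow> p \<in> S0 \<Longrightarrow> pd1 (Qp e) p > 0"
  using pd1_Qp[of e "snd p" "fst p"] Cp_pos[of e "snd p" "fst p"] bf_pos[of e p] by (cases p) (auto simp: S0_def)

lemma Qp_0: "Qp e (0, k) = 0" unfolding Qp_def Ib_0 by simp

lemma Qp_per: "e > 0 \<Longrightarrow> k > 0 \<Longrightarrow> Qp e (c + 2 * pi, k) = Qp e (c, k) + 2 * pi"
  unfolding Qp_def using Ib_per[of e k c] Ib_2pi_pos[of e k] by (simp add: Cp_def field_simps)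

lemma Qp_per_nat: "e > 0 \<Longrightarrow> k > 0 \<Longrightarrow> Qp e (c + 2 * pi * real n, k) = Qp e (c, k) + 2 * pi * real n"
proof (induction n)
  case (Suc n)
  have "c + 2 * pi * real (Suc n) = (c + 2 * pi * real n) + 2 * pi" by (simp add: algebra_simps)
  then have "Qp e (c + 2 * pi * real (Suc n), k) = Qp e ((c + 2 * pi * real n) + 2 * pi, k)"
    by (simp only:)
  also have "\<dots> = Qp e (c + 2 * pi * real n, k) + 2 * pi" by (rule Qp_per[OF Suc.prems])
  also have "\<dots> = Qp e (c, k) + 2 * pi * real n + 2 * pi" using Suc.IH[OF Suc.prems] by simp
  also have "\<dots> = Qp e (c, k) + 2 * pi * real (Suc n)" by (simp add: algebra_simps)
  finally show ?case .
qed simp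

lemma Qp_per_int: "e > 0 \<Longrightarrow> k > 0 \<Longrightarrow> Qp e (c + 2 * pi * of_int m, k) = Qp e (c, k) + 2 * pi * of_int m"
proof (cases "m \<ge> 0")
  case True
  assume e: "e > 0" and k: "k > 0"
  then show ?thesis using Qp_per_nat[OF e k, of c "nat m"] True by simp
next
  case False
  assume e: "e > 0" and k: "k > 0"
  have "Qp e ((c + 2 * pi * of_int m) + 2 * pi * real (nat (- m)), k) = Qp e (c + 2 * pi * of_int m, k) + 2 * pi * real (nat (- m))"
    using Qp_per_nat[OF e k] by blast
  moreover have "(c + 2 * pi * of_int m) + 2 * pi * real (nat (- m)) = c" using False by simp
  ultimately show ?thesis using False by simp
qed

lemma Qp_strict:
  assumes e: "e > 0" and k: "k > 0" and ab: "a < b"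
  shows "Qp e (a, k) < Qp e (b, k)"
proof (rule DERIV_pos_imp_increasing[OF ab])
  fix x
  have "0 < Cp e (x, k) * bf e (x, k)" using Cp_pos[OF e k] bf_pos[OF e, of "(x, k)"] k by (simp add: S0_def)
  then show "\<exists>y. ((\<lambda>c. Qp e (c, k)) has_real_derivative y) (at x) \<and> 0 < y"
    using Qp_d1[OF e k, of x] by blast
qed

lemma Qp_inj: "e > 0 \<Longrightarrow> k > 0 \<Longrightarrow> Qp e (a, k) = Qp e (b, k) \<Longrightarrow> a = b"
  using Qp_strict[of e k a b] Qp_strict[of e k b a] by (cases a b rule: linorder_cases) auto

lemma Qp_surj:
  assumes e: "e > 0" and k: "k > 0"
  shows "\<exists>c. Qp e (c, k) = q"
proof -
  define m where "m = \<lfloor>q / (2 * pi)\<rfloor>"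
  have "of_int m \<le> q / (2 * pi)" "q / (2 * pi) < of_int m + 1" unfolding m_def by linarith+
  then have b: "2 * pi * of_int m \<le> q" "q \<le> 2 * pi * (of_int m + 1)" by (auto simp: field_simps)
  have v1: "Qp e (2 * pi * of_int m, k) = 2 * pi * of_int m" using Qp_per_int[OF e k, of 0 m] Qp_0 by simp
  have v2: "Qp e (2 * pi * (of_int m + 1), k) = 2 * pi * (of_int m + 1)"
    using Qp_per_int[OF e k, of 0 "m + 1"] Qp_0 by simp
  have "continuous_on {2 * pi * of_int m .. 2 * pi * (of_int m + 1)} (\<lambda>c. Qp e (c, k))"
    using Qp_d1[OF e k] by (meson DERIV_isCont continuous_at_imp_continuous_on)
  from IVT'[of "\<lambda>c. Qp e (c, k)", OF _ _ _ this] b v1 v2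
  show ?thesis by auto
qed

definition chiQ :: "real \<Rightarrow> real \<Rightarrow> real \<Rightarrow> real" where
  "chiQ e q k = (THE c. Qp e (c, k) = q)"
definition Psi :: "real \<Rightarrow> real \<times> real \<Rightarrow> real \<times> real" where
  "Psi e y = (chiQ e (fst y) (snd y), snd y)"

lemma chiQ: "e > 0 \<Longrightarrow> k > 0 \<Longrightarrow> Qp e (chiQ e q k, k) = q"
proof -
  assume e: "e > 0" and k: "k > 0"
  obtain c where c: "Qp e (c, k) = q" using Qp_surj[OF e k] by blast
  show ?thesis unfolding chiQ_def
    by (rule theI[of _ c]) (use c Qp_inj[OF e k] in auto)
qed

lemma chiQ_Qp: "e > 0 \<Longrightarrow> k > 0 \<Longrightarrow> chiQ e (Qp e (c, k)) k = c"
  using chiQ Qp_inj by blast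

lemma Psi_S0: "e > 0 \<Longrightarrow> snd y > 0 \<Longrightarrow> Psi e y \<in> S0"
  unfolding Psi_def S0_def by auto

lemma Psi_deriv:
  fixes q :: real
  assumes e: "e > 0" and k: "k > 0"
  defines "x \<equiv> Psi e (q, k)"
  shows "(Psi e has_derivative (\<lambda>h. ((fst h - pd2 (Qp e) x * snd h) / pd1 (Qp e) x, snd h))) (at (q, k))"
proof -
  define f where "f = (\<lambda>p. (Qp e p, snd p))"
  have xS: "x \<in> S0" unfolding x_def using Psi_S0[OF e] k by simp
  have fx: "f x = (q, k)" unfolding f_def x_def Psi_def using chiQ[OF e k] by simp
  have QC: "cC1 S0 (Qp e)" using cC2_C1[OF cC2_Qp[OF e]] .
  have contf: "continuous_on S0 f" unfolding f_def using cC1_cont[OF QC] by (intro continuous_intros)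
  have gf: "Psi e (f z) = z" if "z \<in> S0" for z
    using that chiQ_Qp[OF e] unfolding f_def Psi_def S0_def by (cases z) auto
  have df: "(f has_derivative (\<lambda>h. (pd1 (Qp e) x * fst h + pd2 (Qp e) x * snd h, snd h))) (at x)"
    unfolding f_def by (intro has_derivative_Pair cC1_hasd[OF QC xS] has_derivative_snd has_derivative_ident)
  have pos: "pd1 (Qp e) x > 0" using pd1_Qp_pos[OF e xS] .
  have id: "(\<lambda>h. (pd1 (Qp e) x * fst h + pd2 (Qp e) x * snd h, snd h)) \<circ> (\<lambda>h. ((fst h - pd2 (Qp e) x * snd h) / pd1 (Qp e) x, snd h)) = id"
    using pos by (auto simp: fun_eq_iff field_simps)
  from has_derivative_inverse_strong[OF open_S0 xS contf gf df id]
  show ?thesis unfolding fx .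
qed

definition DD :: "real \<Rightarrow> (real \<times> real \<Rightarrow> real) \<Rightarrow> real \<times> real \<Rightarrow> real" where
  "DD e F p = pd2 F p - pd1 F p * pd2 (Qp e) p / pd1 (Qp e) p"

lemma Cp_d:
  assumes e: "e > 0" and k: "k > 0"
  shows "(cfun e has_real_derivative pd2 (Cp e) (0, k)) (at k)"
proof -
  have "((\<lambda>k. Cp e (0, k)) has_real_derivative pd2 (Cp e) (0, k)) (at k)"
    using line2[OF cC2_C1[OF cC2_Cp[OF e]] k] .
  then show ?thesis
    by (rule has_field_derivative_transform_within_open[where S="{0<..}"]) (use k Cfun_eq[OF e] in auto)
qed

lemma YL:
  assumes e: "e > 0" and F: "cC1 S0 F"
    and hrep: "\<And>q k. k > 0 \<Longrightarrow> h t q k = F (Psi e (q + cfun e k * t, k))"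
    and k: "k > 0"
  shows "Yop e h t q k = - DD e F (Psi e (q + cfun e k * t, k))"
proof -
  define y where "y = (q + cfun e k * t, k)"
  define x where "x = Psi e y"
  have xS: "x \<in> S0" unfolding x_def y_def using Psi_S0[OF e] k by simp
  define A where "A = pd1 F x / pd1 (Qp e) x"
  define B where "B = DD e F x"
  have dFP: "((\<lambda>z. F (Psi e z)) has_derivative (\<lambda>h. A * fst h + B * snd h)) (at y)"
  proof -
    have dP: "(Psi e has_derivative (\<lambda>h. ((fst h - pd2 (Qp e) x * snd h) / pd1 (Qp e) x, snd h))) (at y)"
      using Psi_deriv[OF e k, of "q + cfun e k * t"] unfolding x_def y_def by simp
    have dF: "(F has_derivative (\<lambda>h. pd1 F x * fst h + pd2 F x * snd h)) (at (Psi e y))"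
      using cC1_hasd[OF F xS] unfolding x_def .
    show ?thesis
      by (rule has_derivative_eq_rhs[OF has_derivative_compose[OF dP dF]])
         (use pd1_Qp_pos[OF e xS] in \<open>auto simp: fun_eq_iff A_def B_def DD_def field_simps\<close>)
  qed
  define c' where "c' = pd2 (Cp e) (0, k)"
  have dc: "(cfun e has_real_derivative c') (at k)" unfolding c'_def using Cp_d[OF e k] .
  have dq: "((\<lambda>q'. h t q' k) has_real_derivative A) (at q)"
  proof -
    have "((\<lambda>q'. F (Psi e (q' + cfun e k * t, k))) has_derivative (\<lambda>d. A * fst (d, 0::real) + B * snd (d, 0::real))) (at q)"
      by (rule has_derivative_compose[of "\<lambda>q'. (q' + cfun e k * t, k)", OF _ dFP[unfolded y_def]])
         (auto intro!: derivative_eq_intros)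
    then have "((\<lambda>q'. F (Psi e (q' + cfun e k * t, k))) has_derivative (\<lambda>d. A * d)) (at q)"
      by simp
    then have "((\<lambda>q'. F (Psi e (q' + cfun e k * t, k))) has_real_derivative A) (at q)"
      by (simp add: has_field_derivative_def)
    then show ?thesis using hrep[OF k] by simp
  qed
  have dk: "((\<lambda>k'. h t q k') has_real_derivative A * (c' * t) + B) (at k)"
  proof -
    have dl: "((\<lambda>k'. (q + cfun e k' * t, k')) has_derivative (\<lambda>d. (d * c' * t, d))) (at k)"
      using dc unfolding has_field_derivative_def
      by (auto intro!: derivative_eq_intros simp: mult.commute mult.left_commute)
    have "((\<lambda>k'. F (Psi e (q + cfun e k' * t, k'))) has_derivative (\<lambda>d. A * fst (d * c' * t, d) + B * snd (d * c' * t, d))) (at k)"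
      using has_derivative_compose[OF dl dFP[unfolded y_def]] by simp
    then have "((\<lambda>k'. F (Psi e (q + cfun e k' * t, k'))) has_derivative (\<lambda>d. (A * (c' * t) + B) * d)) (at k)"
      by (rule has_derivative_eq_rhs) (simp add: fun_eq_iff algebra_simps)
    then have "((\<lambda>k'. F (Psi e (q + cfun e k' * t, k'))) has_real_derivative A * (c' * t) + B) (at k)"
      by (simp add: has_field_derivative_def)
    then show ?thesis
      by (rule has_field_derivative_transform_within_open[where S="{0<..}"]) (use k hrep in auto)
  qed
  have "Yop e h t q k = t * c' * A - (A * (c' * t) + B)"
    unfolding Yop_def using DERIV_imp_deriv[OF dc] DERIV_imp_deriv[OF dq] DERIV_imp_deriv[OF dk] by simp
  also have "\<dots> = - B" by (simp add: algebra_simps)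
  finally show ?thesis unfolding B_def x_def y_def .
qed

definition unc :: "(real \<Rightarrow> real \<Rightarrow> real) \<Rightarrow> real \<times> real \<Rightarrow> real" where
  "unc g = (\<lambda>p. g (fst p) (snd p))"

lemma unc_apply[simp]: "unc g (x, v) = g x v" unfolding unc_def by simp

lemma lineg1:
  assumes "(F has_derivative (\<lambda>h. A * fst h + B * snd h)) (at (x, v))"
  shows "((\<lambda>y. F (y, v)) has_real_derivative A) (at x)"
proof -
  have "((\<lambda>y. F (y, v)) has_derivative (\<lambda>d. A * fst (d, 0::real) + B * snd (d, 0::real))) (at x)"
    using has_derivative_compose[OF has_derivative_Pair[OF has_derivative_ident has_derivative_const] assms]
    by simp
  then have "((\<lambda>y. F (y, v)) has_derivative (\<lambda>d. A * d)) (at x)" by simp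
  then show ?thesis by (simp add: has_field_derivative_def)
qed

lemma lineg2:
  assumes "(F has_derivative (\<lambda>h. A * fst h + B * snd h)) (at (x, v))"
  shows "((\<lambda>w. F (x, w)) has_real_derivative B) (at v)"
proof -
  have "((\<lambda>w. F (x, w)) has_derivative (\<lambda>d. A * fst (0::real, d) + B * snd (0::real, d))) (at v)"
    using has_derivative_compose[OF has_derivative_Pair[OF has_derivative_const has_derivative_ident] assms]
    by simp
  then have "((\<lambda>w. F (x, w)) has_derivative (\<lambda>d. B * d)) (at v)" by simp
  then show ?thesis by (simp add: has_field_derivative_def)
qed

definition alldiff :: "(real \<Rightarrow> real \<Rightarrow> real) \<Rightarrow> bool" where
  "alldiff g \<longleftrightarrow> (\<forall>p. unc g differentiable at p)"

lemma alldiff_pd: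
  assumes "alldiff g"
  shows "pd1 (unc g) (x, v) = pdx g x v" "pd2 (unc g) (x, v) = pdv g x v"
    "((\<lambda>y. g y v) has_real_derivative pdx g x v) (at x)"
    "((\<lambda>w. g x w) has_real_derivative pdv g x v) (at v)"
proof -
  have d: "(unc g has_derivative (\<lambda>h. pd1 (unc g) (x, v) * fst h + pd2 (unc g) (x, v) * snd h)) (at (x, v))"
    using assms pd_hasd unfolding alldiff_def by blast
  have 1: "((\<lambda>y. g y v) has_real_derivative pd1 (unc g) (x, v)) (at x)" using lineg1[OF d] by simp
  have 2: "((\<lambda>w. g x w) has_real_derivative pd2 (unc g) (x, v)) (at v)" using lineg2[OF d] by simp
  show e1: "pd1 (unc g) (x, v) = pdx g x v" unfolding pdx_def using DERIV_imp_deriv[OF 1] by simp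
  show e2: "pd2 (unc g) (x, v) = pdv g x v" unfolding pdv_def using DERIV_imp_deriv[OF 2] by simp
  show "((\<lambda>y. g y v) has_real_derivative pdx g x v) (at x)" using 1 e1 by simp
  show "((\<lambda>w. g x w) has_real_derivative pdv g x v) (at v)" using 2 e2 by simp
qed

lemma alldiff_cont: "alldiff g \<Longrightarrow> continuous_on A (unc g)"
  unfolding alldiff_def
  by (meson continuous_at_imp_continuous_on differentiable_imp_continuous_within)

lemma alldiff_C1:
  assumes "alldiff g" "alldiff (pdx g)" "alldiff (pdv g)"
  shows "cC1 UNIV (unc g)"
proof -
  have "continuous_on UNIV (pd1 (unc g))"
  proof -
    have "pd1 (unc g) = unc (pdx g)" using alldiff_pd(1)[OF assms(1)] by (auto simp: fun_eq_iff unc_def)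
    then show ?thesis using alldiff_cont[OF assms(2)] by simp
  qed
  moreover have "continuous_on UNIV (pd2 (unc g))"
  proof -
    have "pd2 (unc g) = unc (pdv g)" using alldiff_pd(2)[OF assms(1)] by (auto simp: fun_eq_iff unc_def)
    then show ?thesis using alldiff_cont[OF assms(3)] by simp
  qed
  ultimately show ?thesis using assms(1) unfolding cC1_def alldiff_def by auto
qed

lemma pd_unc: "alldiff g \<Longrightarrow> pd1 (unc g) = unc (pdx g)" "alldiff g \<Longrightarrow> pd2 (unc g) = unc (pdv g)"
  using alldiff_pd(1,2) by (auto simp: fun_eq_iff unc_def)

lemma smooth_alldiff: "smooth2 f \<Longrightarrow> alldiff (iter_pd ops f)"
  unfolding smooth2_def alldiff_def unc_def by (simp add: case_prod_beta')

lemma smooth_ad: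
  assumes "smooth2 f"
  shows "alldiff f" "alldiff (pdx f)" "alldiff (pdv f)" "alldiff (pdx (pdx f))" "alldiff (pdv (pdx f))"
    "alldiff (pdx (pdv f))" "alldiff (pdv (pdv f))"
  using smooth_alldiff[OF assms, of "[]"] smooth_alldiff[OF assms, of "[True]"] smooth_alldiff[OF assms, of "[False]"]
    smooth_alldiff[OF assms, of "[True, True]"] smooth_alldiff[OF assms, of "[False, True]"]
    smooth_alldiff[OF assms, of "[True, False]"] smooth_alldiff[OF assms, of "[False, False]"]
  by auto

lemma smooth_C2:
  assumes "smooth2 f"
  shows "cC2 UNIV (unc f)" "cC1 UNIV (unc (pdx f))" "cC1 UNIV (unc (pdv f))"
proof -
  note A = smooth_ad[OF assms]
  have c1: "cC1 UNIV (unc (pdx f))" "cC1 UNIV (unc (pdv f))"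
    using smooth_alldiff[OF assms, of "[True, True]"] smooth_alldiff[OF assms, of "[False, True]"]
      smooth_alldiff[OF assms, of "[True, False]"] smooth_alldiff[OF assms, of "[False, False]"]
    by (auto intro!: alldiff_C1 A)
  show "cC1 UNIV (unc (pdx f))" "cC1 UNIV (unc (pdv f))" using c1 .
  show "cC2 UNIV (unc f)" unfolding cC2_def pd_unc[OF A(1)] using c1 alldiff_C1[OF A(1-3)] by simp
qed

lemma schwarz:
  fixes g :: "real \<Rightarrow> real \<Rightarrow> real"
  assumes A: "alldiff g" "alldiff (pdx g)" "alldiff (pdv g)"
    and cA: "continuous_on UNIV (unc (pdv (pdx g)))" and cB: "continuous_on UNIV (unc (pdx (pdv g)))"
  shows "pdv (pdx g) x0 v0 = pdx (pdv g) x0 v0"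
proof (rule ccontr)
  define a where "a = pdv (pdx g) x0 v0"
  define b where "b = pdx (pdv g) x0 v0"
  assume ne: "pdv (pdx g) x0 v0 \<noteq> pdx (pdv g) x0 v0"
  define \<epsilon> where "\<epsilon> = \<bar>a - b\<bar> / 2"
  have ep: "\<epsilon> > 0" using ne unfolding \<epsilon>_def a_def b_def by simp
  obtain d1 where d1: "d1 > 0" "\<And>p. dist p (x0, v0) < d1 \<Longrightarrow> dist (unc (pdv (pdx g)) p) a < \<epsilon>"
    using cA ep unfolding continuous_on_iff a_def by (metis UNIV_I unc_apply)
  obtain d2 where d2: "d2 > 0" "\<And>p. dist p (x0, v0) < d2 \<Longrightarrow> dist (unc (pdx (pdv g)) p) b < \<epsilon>"
    using cB ep unfolding continuous_on_iff b_def by (metis UNIV_I unc_apply)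
  define d where "d = min d1 d2"
  define h where "h = d / 2"
  have h0: "h > 0" unfolding h_def d_def using d1 d2 by simp
  have near: "dist (x, v) (x0, v0) < d" if "x0 \<le> x" "x \<le> x0 + h" "v0 \<le> v" "v \<le> v0 + h" for x v
  proof -
    have s2: "sqrt 2 < 2" by (simp add: real_less_lsqrt)
    have hd: "h < d / sqrt 2" unfolding h_def using d1 d2 s2 unfolding d_def
      by (simp add: field_simps)
    have "\<bar>x - x0\<bar> < d / sqrt 2" "\<bar>v - v0\<bar> < d / sqrt 2" using that hd by auto
    then have "sqrt ((x - x0)\<^sup>2 + (v - v0)\<^sup>2) < d" by (rule real_sqrt_sum_squares_less)
    then show ?thesis unfolding dist_Pair_Pair dist_real_def by simp
  qed
  define D where "D = g (x0 + h) (v0 + h) - g (x0 + h) v0 - g x0 (v0 + h) + g x0 v0"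
  have dgx: "((\<lambda>y. g y w) has_real_derivative pdx g y0 w) (at y0)" for y0 w using alldiff_pd(3)[OF A(1)] .
  have dgv: "((\<lambda>w. g y w) has_real_derivative pdv g y w0) (at w0)" for y w0 using alldiff_pd(4)[OF A(1)] .
  have dgxv: "((\<lambda>w. pdx g y w) has_real_derivative pdv (pdx g) y w0) (at w0)" for y w0 using alldiff_pd(4)[OF A(2)] .
  have dgvx: "((\<lambda>y. pdv g y w) has_real_derivative pdx (pdv g) y0 w) (at y0)" for y0 w using alldiff_pd(3)[OF A(3)] .
  obtain \<xi> where \<xi>: "x0 < \<xi>" "\<xi> < x0 + h"
    "(g (x0 + h) (v0 + h) - g (x0 + h) v0) - (g x0 (v0 + h) - g x0 v0) = h * (pdx g \<xi> (v0 + h) - pdx g \<xi> v0)"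
    using MVT2[of x0 "x0 + h" "\<lambda>y. g y (v0 + h) - g y v0" "\<lambda>y. pdx g y (v0 + h) - pdx g y v0"] h0
      DERIV_diff[OF dgx dgx] by auto
  obtain \<eta> where \<eta>: "v0 < \<eta>" "\<eta> < v0 + h" "pdx g \<xi> (v0 + h) - pdx g \<xi> v0 = h * pdv (pdx g) \<xi> \<eta>"
    using MVT2[of v0 "v0 + h" "\<lambda>w. pdx g \<xi> w" "\<lambda>w. pdv (pdx g) \<xi> w"] h0 dgxv by auto
  obtain \<eta>' where \<eta>': "v0 < \<eta>'" "\<eta>' < v0 + h"
    "(g (x0 + h) (v0 + h) - g x0 (v0 + h)) - (g (x0 + h) v0 - g x0 v0) = h * (pdv g (x0 + h) \<eta>' - pdv g x0 \<eta>')"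
    using MVT2[of v0 "v0 + h" "\<lambda>w. g (x0 + h) w - g x0 w" "\<lambda>w. pdv g (x0 + h) w - pdv g x0 w"] h0
      DERIV_diff[OF dgv dgv] by auto
  obtain \<xi>' where \<xi>': "x0 < \<xi>'" "\<xi>' < x0 + h" "pdv g (x0 + h) \<eta>' - pdv g x0 \<eta>' = h * pdx (pdv g) \<xi>' \<eta>'"
    using MVT2[of x0 "x0 + h" "\<lambda>y. pdv g y \<eta>'" "\<lambda>y. pdx (pdv g) y \<eta>'"] h0 dgvx by auto
  have "D = h * (h * pdv (pdx g) \<xi> \<eta>)" using \<xi>(3) \<eta>(3) unfolding D_def by (simp add: algebra_simps)
  moreover have "D = h * (h * pdx (pdv g) \<xi>' \<eta>')" using \<eta>'(3) \<xi>'(3) unfolding D_def by (simp add: algebra_simps)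
  ultimately have eq: "pdv (pdx g) \<xi> \<eta> = pdx (pdv g) \<xi>' \<eta>'" using h0 by simp
  have "dist (\<xi>, \<eta>) (x0, v0) < d" using near \<xi> \<eta> by simp
  then have "\<bar>pdv (pdx g) \<xi> \<eta> - a\<bar> < \<epsilon>" using d1(2)[of "(\<xi>, \<eta>)"] unfolding d_def dist_real_def by simp
  moreover have "dist (\<xi>', \<eta>') (x0, v0) < d" using near \<xi>' \<eta>' by simp
  then have "\<bar>pdx (pdv g) \<xi>' \<eta>' - b\<bar> < \<epsilon>" using d2(2)[of "(\<xi>', \<eta>')"] unfolding d_def dist_real_def by simp
  ultimately show False using eq unfolding \<epsilon>_def by (auto simp: abs_if split: if_split_asm)
qed

lemma smooth_schwarz:
  assumes "smooth2 f"
  shows "pdv (pdx f) x v = pdx (pdv f) x v"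
  using schwarz[OF smooth_ad(1-3)[OF assms] alldiff_cont[OF smooth_ad(5)[OF assms]] alldiff_cont[OF smooth_ad(6)[OF assms]]] .

lemma d_inv1': "x \<in> {0<..} \<Longrightarrow> ((\<lambda>x::real. 1 / x) has_real_derivative (- 1 / x^2)) (at x)"
  using d_inv1 by simp

lemma cC1_inv:
  assumes S: "open S" and F: "cC1 S F" and pos: "\<And>p. p \<in> S \<Longrightarrow> F p > 0"
  shows "cC1 S (\<lambda>p. 1 / F p)"
proof -
  have T: "cC1 ({0<..} \<times> UNIV) (\<lambda>q. 1 / fst q)"
    by (rule cC1_1d(1)[OF open_greaterThan d_inv1']) (auto intro!: continuous_intros)
  show ?thesis
    using cC1_comp(1)[OF S open_Times[OF open_greaterThan open_UNIV] T F F] pos by auto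
qed

context
  fixes e :: real
  assumes e: "e > 0"
begin

lemma QC2: "cC2 S0 (Qp e)" using cC2_Qp[OF e] .
lemma QC1s: "cC1 S0 (Qp e)" "cC1 S0 (pd1 (Qp e))" "cC1 S0 (pd2 (Qp e))" using QC2 unfolding cC2_def by auto

lemma DD_alt: "DD e F = (\<lambda>p. pd2 F p - pd1 F p * pd2 (Qp e) p * (1 / pd1 (Qp e) p))"
  unfolding DD_def[abs_def] by (simp add: fun_eq_iff)

lemma cC1_DD:
  assumes F: "cC2 S0 F"
  shows "cC1 S0 (DD e F)"
proof -
  have F1: "cC1 S0 (pd1 F)" "cC1 S0 (pd2 F)" using F unfolding cC2_def by auto
  have I: "cC1 S0 (\<lambda>p. 1 / pd1 (Qp e) p)" by (rule cC1_inv[OF open_S0 QC1s(2) pd1_Qp_pos[OF e]])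
  show ?thesis unfolding DD_alt
    by (intro cC1_diff cC1_mult F1 QC1s I open_S0)
qed

lemma cont_DD:
  assumes F: "cC1 S0 F"
  shows "continuous_on S0 (DD e F)"
proof -
  have c: "continuous_on S0 (pd1 F)" "continuous_on S0 (pd2 F)" using F unfolding cC1_def by auto
  have q: "continuous_on S0 (pd1 (Qp e))" "continuous_on S0 (pd2 (Qp e))" using QC1s(1) unfolding cC1_def by auto
  show ?thesis unfolding DD_def[abs_def]
    by (intro continuous_intros c q) (use pd1_Qp_pos[OF e] in force)
qed

lemma DD_add: "cC1 S0 u \<Longrightarrow> cC1 S0 w \<Longrightarrow> p \<in> S0 \<Longrightarrow> DD e (\<lambda>p. u p + w p) p = DD e u p + DD e w p"
  unfolding DD_def using cC1_add(2,3)[OF open_S0, of u w p] by (simp add: algebra_simps add_divide_distrib)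

lemma DD_mult: "cC1 S0 u \<Longrightarrow> cC1 S0 w \<Longrightarrow> p \<in> S0 \<Longrightarrow> DD e (\<lambda>p. u p * w p) p = DD e u p * w p + u p * DD e w p"
  unfolding DD_def using cC1_mult(2,3)[OF open_S0, of u w p] pd1_Qp_pos[OF e, of p]
  by (simp add: field_simps)

lemma DD_uminus: "cC1 S0 u \<Longrightarrow> p \<in> S0 \<Longrightarrow> DD e (\<lambda>p. - u p) p = - DD e u p"
  unfolding DD_def using cC1_diff(2,3)[OF open_S0 cC1_const[OF open_S0, of 0], of u p] pd_const
  by (simp add: algebra_simps)

lemma DD_comp:
  assumes Fo: "cC1 UNIV Fo" and U: "cC1 S0 U" and W: "cC1 S0 W" and p: "p \<in> S0"
  shows "DD e (\<lambda>p. Fo (U p, W p)) p = pd1 Fo (U p, W p) * DD e U p + pd2 Fo (U p, W p) * DD e W p"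
  unfolding DD_def using cC1_comp(2,3)[OF open_S0 open_UNIV Fo U W, of p] p pd1_Qp_pos[OF e p]
  by (simp add: field_simps)

lemma DD_cong: "(\<And>x. x \<in> S0 \<Longrightarrow> F x = G x) \<Longrightarrow> p \<in> S0 \<Longrightarrow> DD e F p = DD e G p"
  unfolding DD_def using pd_cong[OF open_S0, of p F G] by simp

abbreviation "a1 \<equiv> DD e (Xf e)"
abbreviation "a2 \<equiv> DD e (Vf e)"

lemma XV_C1: "cC1 S0 (Xf e)" "cC1 S0 (Vf e)" using cC2_Xf[OF e] cC2_Vf[OF e] unfolding cC2_def by auto

lemma a_C1: "cC1 S0 a1" "cC1 S0 a2" using cC1_DD cC2_Xf[OF e] cC2_Vf[OF e] by auto

definition Gf :: "(real \<Rightarrow> real \<Rightarrow> real) \<Rightarrow> real \<times> real \<Rightarrow> real" where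
  "Gf f0 p = unc f0 (Xf e p, Vf e p)"
definition E1 :: "(real \<Rightarrow> real \<Rightarrow> real) \<Rightarrow> real \<times> real \<Rightarrow> real" where
  "E1 f0 p = - (unc (pdx f0) (Xf e p, Vf e p) * a1 p + unc (pdv f0) (Xf e p, Vf e p) * a2 p)"
definition E2 :: "(real \<Rightarrow> real \<Rightarrow> real) \<Rightarrow> real \<times> real \<Rightarrow> real" where
  "E2 f0 p = (unc (pdx (pdx f0)) (Xf e p, Vf e p) * a1 p + unc (pdv (pdx f0)) (Xf e p, Vf e p) * a2 p) * a1 p
     + unc (pdx f0) (Xf e p, Vf e p) * DD e a1 p
     + (unc (pdx (pdv f0)) (Xf e p, Vf e p) * a1 p + unc (pdv (pdv f0)) (Xf e p, Vf e p) * a2 p) * a2 p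
     + unc (pdv f0) (Xf e p, Vf e p) * DD e a2 p"

lemma G_C2:
  assumes f: "smooth2 f0"
  shows "cC2 S0 (Gf f0)"
  unfolding Gf_def[abs_def]
  by (rule cC2_comp[OF open_S0 open_UNIV smooth_C2(1)[OF f] cC2_Xf[OF e] cC2_Vf[OF e]]) auto

lemma comp_C1:
  assumes "cC1 UNIV Fo"
  shows "cC1 S0 (\<lambda>p. Fo (Xf e p, Vf e p))"
  by (rule cC1_comp(1)[OF open_S0 open_UNIV assms XV_C1]) auto

lemma E1_eq:
  assumes f: "smooth2 f0" and p: "p \<in> S0"
  shows "- DD e (Gf f0) p = E1 f0 p"
proof -
  have F0: "cC1 UNIV (unc f0)" using smooth_C2(1)[OF f] unfolding cC2_def by auto
  show ?thesis
    unfolding Gf_def[abs_def] E1_def DD_comp[OF F0 XV_C1 p] pd_unc[OF smooth_ad(1)[OF f]] by simp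
qed

lemma E1_C1:
  assumes f: "smooth2 f0"
  shows "cC1 S0 (E1 f0)"
  unfolding E1_def[abs_def]
  by (intro cC1_diff(1)[OF open_S0 cC1_const[OF open_S0, of 0], simplified] cC1_add cC1_mult
      comp_C1 smooth_C2(2,3)[OF f] a_C1 open_S0)

lemma E2_eq:
  assumes f: "smooth2 f0" and p: "p \<in> S0"
  shows "- DD e (E1 f0) p = E2 f0 p"
proof -
  define A where "A = (\<lambda>p. unc (pdx f0) (Xf e p, Vf e p))"
  define B where "B = (\<lambda>p. unc (pdv f0) (Xf e p, Vf e p))"
  have AC: "cC1 S0 A" "cC1 S0 B" unfolding A_def B_def
    by (rule comp_C1[OF smooth_C2(2)[OF f]], rule comp_C1[OF smooth_C2(3)[OF f]])
  have ABC: "cC1 S0 (\<lambda>p. A p * a1 p)" "cC1 S0 (\<lambda>p. B p * a2 p)"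
    by (intro cC1_mult AC a_C1 open_S0)+
  have sC: "cC1 S0 (\<lambda>p. A p * a1 p + B p * a2 p)" by (intro cC1_add ABC open_S0)
  have "E1 f0 = (\<lambda>p. - (A p * a1 p + B p * a2 p))" unfolding E1_def A_def B_def by (simp add: fun_eq_iff)
  then have "- DD e (E1 f0) p = DD e (\<lambda>p. A p * a1 p) p + DD e (\<lambda>p. B p * a2 p) p"
    using DD_uminus[OF sC p] DD_add[OF ABC p] by simp
  also have "\<dots> = (DD e A p * a1 p + A p * DD e a1 p) + (DD e B p * a2 p + B p * DD e a2 p)"
    using DD_mult[OF AC(1) a_C1(1) p] DD_mult[OF AC(2) a_C1(2) p] by simp
  also have "DD e A p = unc (pdx (pdx f0)) (Xf e p, Vf e p) * a1 p + unc (pdv (pdx f0)) (Xf e p, Vf e p) * a2 p"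
    unfolding A_def DD_comp[OF smooth_C2(2)[OF f] XV_C1 p] pd_unc[OF smooth_ad(2)[OF f]] by simp
  also have "DD e B p = unc (pdx (pdv f0)) (Xf e p, Vf e p) * a1 p + unc (pdv (pdv f0)) (Xf e p, Vf e p) * a2 p"
    unfolding B_def DD_comp[OF smooth_C2(3)[OF f] XV_C1 p] pd_unc[OF smooth_ad(3)[OF f]] by simp
  finally show ?thesis unfolding E2_def A_def B_def by (simp add: algebra_simps)
qed

definition per0 :: "(real \<times> real \<Rightarrow> real) \<Rightarrow> bool" where
  "per0 F \<longleftrightarrow> (\<forall>c k. k > 0 \<longrightarrow> F (c + 2 * pi, k) = F (c, k))"

lemma per_pd:
  assumes F: "cC1 S0 F" and P: "\<And>c k. k > 0 \<Longrightarrow> F (c + 2 * pi, k) = F (c, k) + C"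
  shows "per0 (pd1 F)" "per0 (pd2 F)"
proof -
  have *: "pd1 F (c + 2 * pi, k) = pd1 F (c, k) \<and> pd2 F (c + 2 * pi, k) = pd2 F (c, k)" if k: "k > 0" for c k
  proof -
    define p where "p = (c, k)"
    have pS: "p \<in> S0" "(c + 2 * pi, k) \<in> S0" using k by (auto simp: p_def S0_def)
    define sh where "sh = (\<lambda>p::real \<times> real. (fst p + 2 * pi, snd p))"
    have dsh: "(sh has_derivative (\<lambda>h. (fst h, snd h))) (at p)" unfolding sh_def
      by (auto intro!: derivative_eq_intros)
    have shp: "sh p = (c + 2 * pi, k)" unfolding sh_def p_def by simp
    have "((\<lambda>x. F (sh x)) has_derivative (\<lambda>h. pd1 F (sh p) * fst h + pd2 F (sh p) * snd h)) (at p)"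
      using has_derivative_compose[OF dsh cC1_hasd[OF F, of "sh p"]] pS shp by simp
    then have e1: "pd1 (\<lambda>x. F (sh x)) p = pd1 F (c + 2 * pi, k)" "pd2 (\<lambda>x. F (sh x)) p = pd2 F (c + 2 * pi, k)"
      using pd_eq shp by auto
    have eqS: "\<And>x. x \<in> S0 \<Longrightarrow> F (sh x) = F x + C" unfolding sh_def S0_def using P by auto
    have e2: "pd1 (\<lambda>x. F (sh x)) p = pd1 (\<lambda>x. F x + C) p" "pd2 (\<lambda>x. F (sh x)) p = pd2 (\<lambda>x. F x + C) p"
      using pd_cong[OF open_S0 pS(1) eqS] by auto
    have e3: "pd1 (\<lambda>x. F x + C) p = pd1 F p" "pd2 (\<lambda>x. F x + C) p = pd2 F p"
      using cC1_add(2,3)[OF open_S0 F cC1_const[OF open_S0], of p C] pS pd_const by auto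
    show ?thesis using e1 e2 e3 unfolding p_def by simp
  qed
  show "per0 (pd1 F)" "per0 (pd2 F)" unfolding per0_def using * by auto
qed

lemma per0_X: "per0 (Xf e)" "per0 (Vf e)"
  unfolding per0_def using Xf_shift[of e _ 1] Vf_shift[of e _ 1] by auto

lemma per0_Q: "per0 (pd1 (Qp e))" "per0 (pd2 (Qp e))"
  using per_pd[OF QC1s(1), of "2 * pi"] Qp_per[OF e] by auto

lemma per0_DD:
  assumes F: "cC1 S0 F" and P: "per0 F"
  shows "per0 (DD e F)"
proof -
  have "per0 (pd1 F)" "per0 (pd2 F)" using per_pd[OF F, of 0] P unfolding per0_def by auto
  then show ?thesis using per0_Q unfolding per0_def DD_def by auto
qed

lemma per0_a: "per0 a1" "per0 a2" "per0 (DD e a1)" "per0 (DD e a2)"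
  using per0_DD XV_C1 per0_X a_C1 by auto

lemma per0_nat: "per0 F \<Longrightarrow> k > 0 \<Longrightarrow> F (c + 2 * pi * real n, k) = F (c, k)"
proof (induction n)
  case (Suc n)
  have "c + 2 * pi * real (Suc n) = (c + 2 * pi * real n) + 2 * pi" by (simp add: algebra_simps)
  then have "F (c + 2 * pi * real (Suc n), k) = F ((c + 2 * pi * real n) + 2 * pi, k)" by (simp only:)
  also have "\<dots> = F (c + 2 * pi * real n, k)" using Suc.prems unfolding per0_def by blast
  finally show ?case using Suc by simp
qed simp

lemma per0_int: "per0 F \<Longrightarrow> k > 0 \<Longrightarrow> F (c + 2 * pi * of_int m, k) = F (c, k)"
proof (cases "m \<ge> 0")
  case True
  assume "per0 F" "k > 0"
  then show ?thesis using per0_nat[of F k c "nat m"] True by simp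
next
  case False
  assume P: "per0 F" and k: "k > 0"
  have "F ((c + 2 * pi * of_int m) + 2 * pi * real (nat (- m)), k) = F (c + 2 * pi * of_int m, k)"
    using per0_nat[OF P k] by blast
  moreover have "(c + 2 * pi * of_int m) + 2 * pi * real (nat (- m)) = c" using False by simp
  ultimately show ?thesis by simp
qed

definition kap :: "real \<times> real \<Rightarrow> real" where
  "kap p = 1 + \<bar>a1 p\<bar> + \<bar>a2 p\<bar> + (a1 p)^2 + 2 * \<bar>a1 p\<bar> * \<bar>a2 p\<bar> + (a2 p)^2 + \<bar>DD e a1 p\<bar> + \<bar>DD e a2 p\<bar>"

lemma kap_cont: "continuous_on S0 kap"
proof -
  have c: "continuous_on S0 a1" "continuous_on S0 a2" "continuous_on S0 (DD e a1)" "continuous_on S0 (DD e a2)"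
    using cC1_cont a_C1 cont_DD by auto
  show ?thesis unfolding kap_def[abs_def] by (intro continuous_intros c)
qed

lemma kap_per: "per0 kap"
  using per0_a unfolding per0_def kap_def by simp

end

lemma abm: "\<bar>x\<bar> \<le> (m::real) \<Longrightarrow> \<bar>x * y\<bar> \<le> m * \<bar>y\<bar>"
  by (simp add: abs_mult mult_right_mono)

lemma Mbounds:
  fixes f0 :: "real \<Rightarrow> real \<Rightarrow> real"
  assumes H: "\<forall>x v. (\<Sum>(a, b) \<in> {(a, b). a + b \<le> (2::nat)}. \<bar>(pdx ^^ a) ((pdv ^^ b) f0) x v\<bar>) \<le> M"
  shows "\<bar>f0 x v\<bar> \<le> M" "\<bar>pdx f0 x v\<bar> \<le> M" "\<bar>pdv f0 x v\<bar> \<le> M"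
    "\<bar>pdx (pdx f0) x v\<bar> \<le> M" "\<bar>pdx (pdv f0) x v\<bar> \<le> M" "\<bar>pdv (pdv f0) x v\<bar> \<le> M"
proof -
  define T where "T = {(a, b). a + b \<le> (2::nat)}"
  have fin: "finite T" by (rule finite_subset[of _ "{0..2} \<times> {0..2}"]) (auto simp: T_def)
  define g where "g = (\<lambda>(a, b). \<bar>(pdx ^^ a) ((pdv ^^ b) f0) x v\<bar>)"
  have le: "g i \<le> M" if "i \<in> T" for i
  proof -
    have "g i \<le> sum g T" by (rule member_le_sum[OF that _ fin]) (auto simp: g_def)
    also have "\<dots> \<le> M" using H unfolding T_def g_def by blast
    finally show ?thesis .
  qed
  show "\<bar>f0 x v\<bar> \<le> M" using le[of "(0, 0)"] by (simp add: T_def g_def)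
  show "\<bar>pdx f0 x v\<bar> \<le> M" using le[of "(1, 0)"] by (simp add: T_def g_def)
  show "\<bar>pdv f0 x v\<bar> \<le> M" using le[of "(0, 1)"] by (simp add: T_def g_def)
  show "\<bar>pdx (pdx f0) x v\<bar> \<le> M" using le[of "(2, 0)"] by (simp add: T_def g_def numeral_2_eq_2)
  show "\<bar>pdx (pdv f0) x v\<bar> \<le> M" using le[of "(1, 1)"] by (simp add: T_def g_def)
  show "\<bar>pdv (pdv f0) x v\<bar> \<le> M" using le[of "(0, 2)"] by (simp add: T_def g_def numeral_2_eq_2)
qed

context
  fixes e :: real
  assumes e: "e > 0"
begin

lemma pw_bound:
  assumes f: "smooth2 f0"
    and H: "\<forall>x v. (\<Sum>(a, b) \<in> {(a, b). a + b \<le> (2::nat)}. \<bar>(pdx ^^ a) ((pdv ^^ b) f0) x v\<bar>) \<le> M"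
  shows "\<bar>Gf e f0 p\<bar> + \<bar>E1 e f0 p\<bar> + \<bar>E2 e f0 p\<bar> \<le> M * kap e p"
proof -
  define x where "x = Xf e p"
  define v where "v = Vf e p"
  define u where "u = DD e (Xf e) p"
  define w where "w = DD e (Vf e) p"
  define u' where "u' = DD e (DD e (Xf e)) p"
  define w' where "w' = DD e (DD e (Vf e)) p"
  note B = Mbounds[OF H, of x v]
  have sw: "pdv (pdx f0) x v = pdx (pdv f0) x v" by (rule smooth_schwarz[OF f])
  have g0: "\<bar>Gf e f0 p\<bar> \<le> M" unfolding Gf_def[OF e] using B(1) by (simp add: x_def v_def)
  have g1: "\<bar>E1 e f0 p\<bar> \<le> M * \<bar>u\<bar> + M * \<bar>w\<bar>"
  proof -
    have "\<bar>E1 e f0 p\<bar> = \<bar>pdx f0 x v * u + pdv f0 x v * w\<bar>"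
      unfolding E1_def[OF e] x_def v_def u_def w_def by simp
    also have "\<dots> \<le> \<bar>pdx f0 x v * u\<bar> + \<bar>pdv f0 x v * w\<bar>" by (rule abs_triangle_ineq)
    also have "\<dots> \<le> M * \<bar>u\<bar> + M * \<bar>w\<bar>" using abm[OF B(2)] abm[OF B(3)] by (intro add_mono)
    finally show ?thesis .
  qed
  have s1: "\<bar>pdx (pdx f0) x v * u + pdv (pdx f0) x v * w\<bar> \<le> M * \<bar>u\<bar> + M * \<bar>w\<bar>"
    using abs_triangle_ineq[of "pdx (pdx f0) x v * u" "pdv (pdx f0) x v * w"] abm[OF B(4), of u] abm[OF B(5), of w] sw
    by simp
  have s2: "\<bar>pdx (pdv f0) x v * u + pdv (pdv f0) x v * w\<bar> \<le> M * \<bar>u\<bar> + M * \<bar>w\<bar>"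
    using abs_triangle_ineq[of "pdx (pdv f0) x v * u" "pdv (pdv f0) x v * w"] abm[OF B(5), of u] abm[OF B(6), of w]
    by simp
  have g2: "\<bar>E2 e f0 p\<bar> \<le> (M * \<bar>u\<bar> + M * \<bar>w\<bar>) * \<bar>u\<bar> + M * \<bar>u'\<bar> + (M * \<bar>u\<bar> + M * \<bar>w\<bar>) * \<bar>w\<bar> + M * \<bar>w'\<bar>"
  proof -
    have "\<bar>E2 e f0 p\<bar> = \<bar>(pdx (pdx f0) x v * u + pdv (pdx f0) x v * w) * u + pdx f0 x v * u'
       + (pdx (pdv f0) x v * u + pdv (pdv f0) x v * w) * w + pdv f0 x v * w'\<bar>"
      unfolding E2_def[OF e] x_def v_def u_def w_def u'_def w'_def by simp
    also have "\<dots> \<le> \<bar>(pdx (pdx f0) x v * u + pdv (pdx f0) x v * w) * u\<bar> + \<bar>pdx f0 x v * u'\<bar>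
       + \<bar>(pdx (pdv f0) x v * u + pdv (pdv f0) x v * w) * w\<bar> + \<bar>pdv f0 x v * w'\<bar>"
      by (smt (verit) abs_triangle_ineq)
    also have "\<dots> \<le> (M * \<bar>u\<bar> + M * \<bar>w\<bar>) * \<bar>u\<bar> + M * \<bar>u'\<bar> + (M * \<bar>u\<bar> + M * \<bar>w\<bar>) * \<bar>w\<bar> + M * \<bar>w'\<bar>"
      using abm[OF s1, of u] abm[OF s2, of w] abm[OF B(2), of u'] abm[OF B(3), of w'] by linarith
    finally show ?thesis .
  qed
  have "M * kap e p = M + M * \<bar>u\<bar> + M * \<bar>w\<bar> + (M * \<bar>u\<bar> + M * \<bar>w\<bar>) * \<bar>u\<bar> + M * \<bar>u'\<bar> + (M * \<bar>u\<bar> + M * \<bar>w\<bar>) * \<bar>w\<bar> + M * \<bar>w'\<bar>"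
    unfolding kap_def[OF e] u_def w_def u'_def w'_def by (simp add: algebra_simps power2_eq_square abs_mult)
  then show ?thesis using g0 g1 g2 by linarith
qed

lemma fbar_per_int:
  assumes P: "\<forall>t q k. fbar t (q + 2 * pi) k = fbar t q k"
  shows "fbar t (q + 2 * pi * of_int m) k = fbar t q k"
proof -
  have n: "fbar t (q + 2 * pi * real n) k = fbar t q k" for n q
  proof (induction n)
    case (Suc n)
    have "q + 2 * pi * real (Suc n) = (q + 2 * pi * real n) + 2 * pi" by (simp add: algebra_simps)
    then have "fbar t (q + 2 * pi * real (Suc n)) k = fbar t ((q + 2 * pi * real n) + 2 * pi) k" by (simp only:)
    also have "\<dots> = fbar t (q + 2 * pi * real n) k" using P by blast
    finally show ?case using Suc by simp
  qed simp
  show ?thesis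
  proof (cases "m \<ge> 0")
    case True then show ?thesis using n[of q "nat m"] by simp
  next
    case False
    have "fbar t ((q + 2 * pi * of_int m) + 2 * pi * real (nat (- m))) k = fbar t (q + 2 * pi * of_int m) k"
      using n by blast
    moreover have "(q + 2 * pi * of_int m) + 2 * pi * real (nat (- m)) = q" using False by simp
    ultimately show ?thesis by simp
  qed
qed

lemma transport:
  assumes T: "\<forall>t q k. t \<ge> 0 \<longrightarrow> k > 0 \<longrightarrow>
        (\<exists>ft fq. ((\<lambda>(s, r). fbar s r k) has_derivative (\<lambda>(ds, dr). ds * ft + dr * fq))
                    (at (t, q) within {0..} \<times> UNIV)
                 \<and> ft - cfun e k * fq = 0)"
    and t: "t \<ge> 0" and k: "k > 0"
  shows "fbar t q k = fbar 0 (q + cfun e k * t) k"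
proof -
  define c where "c = cfun e k"
  define q0 where "q0 = q + c * t"
  define u where "u = (\<lambda>s. fbar s (q0 - c * s) k)"
  have "(u has_derivative (\<lambda>h. 0)) (at s within {0..})" if s: "s \<in> {0..}" for s
  proof -
    obtain ft fq where D: "((\<lambda>(s, r). fbar s r k) has_derivative (\<lambda>(ds, dr). ds * ft + dr * fq))
                    (at (s, q0 - c * s) within {0..} \<times> UNIV)" and z: "ft - c * fq = 0"
      using T s k unfolding c_def by fastforce
    define g where "g = (\<lambda>s::real. (s, q0 - c * s))"
    have dg: "(g has_derivative (\<lambda>h. (h, - c * h))) (at s within {0..})" unfolding g_def
      by (auto intro!: derivative_eq_intros)
    have sub: "g ` {0..} \<subseteq> {0..} \<times> UNIV" unfolding g_def by auto
    have D': "((\<lambda>(s, r). fbar s r k) has_derivative (\<lambda>(ds, dr). ds * ft + dr * fq)) (at (g s) within g ` {0..})"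
      using has_derivative_subset[OF D sub] unfolding g_def by simp
    have "((\<lambda>x. (\<lambda>(s, r). fbar s r k) (g x)) has_derivative (\<lambda>h. (\<lambda>(ds, dr). ds * ft + dr * fq) (h, - c * h))) (at s within {0..})"
      by (rule has_derivative_in_compose[OF dg D'])
    moreover have "(\<lambda>h. (\<lambda>(ds, dr). ds * ft + dr * fq) (h, - c * h)) = (\<lambda>h. h * (ft - c * fq))"
      by (auto simp: fun_eq_iff algebra_simps)
    ultimately show ?thesis using z unfolding u_def g_def by simp
  qed
  then obtain C where "\<forall>x\<in>{0..}. u x = C" using has_derivative_zero_constant[of "{0..}" u] by auto
  then have "u t = u 0" using t by auto
  then show ?thesis unfolding u_def q0_def c_def by simp
qed

lemma G_rel:
  assumes P: "\<forall>t q k. fbar t (q + 2 * pi) k = fbar t q k"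
    and R: "\<forall>x v. (x, v) \<noteq> (0, 0) \<longrightarrow> f0 x v = fbar 0 (Qxv e x v) (Ham e x v)"
    and k: "k > 0"
  shows "fbar 0 q k = Gf e f0 (Psi e (q, k))"
proof -
  define c where "c = chiQ e q k"
  have Qc: "Qp e (c, k) = q" unfolding c_def using chiQ[OF e k] .
  obtain m :: int where m: "chi e (Xf e (c, k)) (Vf e (c, k)) = c + 2 * pi * of_int m"
    using chi_XV[OF e k] by blast
  have "Gf e f0 (Psi e (q, k)) = f0 (Xf e (c, k)) (Vf e (c, k))"
    unfolding Gf_def[OF e] Psi_def c_def by simp
  also have "\<dots> = fbar 0 (Qxv e (Xf e (c, k)) (Vf e (c, k))) k"
    using R XV_nonzero[OF e k, of c] Ham_XV[OF e k, of c] by simp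
  also have "Qxv e (Xf e (c, k)) (Vf e (c, k)) = Qp e (c + 2 * pi * of_int m, k)"
    unfolding Qxv_def Ham_XV[OF e k] m Qfun_eq[OF e k] ..
  also have "\<dots> = q + 2 * pi * of_int m" using Qp_per_int[OF e k] Qc by simp
  finally show ?thesis using fbar_per_int[OF P] by simp
qed

end

theorem lemma4p2:
  fixes eps cs :: real
  assumes "eps > 0" and "cs > 0"
  shows "\<exists>C::real. \<forall>(fbar :: real \<Rightarrow> real \<Rightarrow> real \<Rightarrow> real) (f0 :: real \<Rightarrow> real \<Rightarrow> real) (M :: real).
    ((\<forall>t q k. t \<ge> 0 \<longrightarrow> k > 0 \<longrightarrow>
        (\<exists>ft fq. ((\<lambda>(s, r). fbar s r k) has_derivative (\<lambda>(ds, dr). ds * ft + dr * fq))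
                    (at (t, q) within {0..} \<times> UNIV)
                 \<and> ft - cfun eps k * fq = 0))
     \<and> (\<forall>t q k. fbar t (q + 2 * pi) k = fbar t q k)
     \<and> (\<forall>x v. (x, v) \<noteq> (0, 0) \<longrightarrow> f0 x v = fbar 0 (Qxv eps x v) (Ham eps x v))
     \<and> smooth2 f0
     \<and> (\<forall>x v. f0 x v \<ge> 0)
     \<and> closure {(x, v). f0 x v \<noteq> 0} \<subseteq> {(x, v). cs \<le> Ham eps x v \<and> Ham eps x v \<le> 1 / cs}
     \<and> (\<forall>x v. (\<Sum>(a, b) \<in> {(a, b). a + b \<le> (2::nat)}.
               \<bar>(pdx ^^ a) ((pdv ^^ b) f0) x v\<bar>) \<le> M))
    \<longrightarrow> (\<forall>t q k. t \<ge> 0 \<longrightarrow> cs \<le> k \<longrightarrow> k \<le> 1 / cs \<longrightarrow>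
          (\<Sum>l\<le>(2::nat). \<bar>((Yop eps) ^^ l) fbar t q k\<bar>) \<le> C * M)"

proof -
  have e: "eps > 0" using assms(1) .
  define K where "K = {0..2 * pi} \<times> {cs..1 / cs}"
  have KS: "K \<subseteq> S0" unfolding K_def S0_def using assms(2) by auto
  have "compact K" unfolding K_def by (intro compact_Times compact_Icc)
  moreover have "continuous_on K (kap eps)" using continuous_on_subset[OF kap_cont[OF e] KS] .
  ultimately have "bounded (kap eps ` K)" by (intro compact_imp_bounded compact_continuous_image)
  then obtain B0 where B0: "\<forall>x\<in>kap eps ` K. norm x \<le> B0" unfolding bounded_iff by blast
  then have B: "\<And>p. p \<in> K \<Longrightarrow> \<bar>kap eps p\<bar> \<le> B0" by auto
  define B where "B = B0"
  note B = B[folded B_def]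
  show ?thesis
  proof (rule exI[of _ B], intro allI impI)
    fix fbar :: "real \<Rightarrow> real \<Rightarrow> real \<Rightarrow> real" and f0 :: "real \<Rightarrow> real \<Rightarrow> real" and M :: real
    fix t q k :: real
    assume H: "(\<forall>t q k. t \<ge> 0 \<longrightarrow> k > 0 \<longrightarrow>
        (\<exists>ft fq. ((\<lambda>(s, r). fbar s r k) has_derivative (\<lambda>(ds, dr). ds * ft + dr * fq))
                    (at (t, q) within {0..} \<times> UNIV)
                 \<and> ft - cfun eps k * fq = 0))
     \<and> (\<forall>t q k. fbar t (q + 2 * pi) k = fbar t q k)
     \<and> (\<forall>x v. (x, v) \<noteq> (0, 0) \<longrightarrow> f0 x v = fbar 0 (Qxv eps x v) (Ham eps x v))
     \<and> smooth2 f0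
     \<and> (\<forall>x v. f0 x v \<ge> 0)
     \<and> closure {(x, v). f0 x v \<noteq> 0} \<subseteq> {(x, v). cs \<le> Ham eps x v \<and> Ham eps x v \<le> 1 / cs}
     \<and> (\<forall>x v. (\<Sum>(a, b) \<in> {(a, b). a + b \<le> (2::nat)}.
               \<bar>(pdx ^^ a) ((pdv ^^ b) f0) x v\<bar>) \<le> M)"
    assume t: "t \<ge> 0" and k1: "cs \<le> k" and k2: "k \<le> 1 / cs"
    have k: "k > 0" using k1 assms(2) by simp
    note H1 = H[THEN conjunct1] and H2 = H[THEN conjunct2, THEN conjunct1]
      and H3 = H[THEN conjunct2, THEN conjunct2, THEN conjunct1]
      and f = H[THEN conjunct2, THEN conjunct2, THEN conjunct2, THEN conjunct1]
      and HM = H[THEN conjunct2, THEN conjunct2, THEN conjunct2, THEN conjunct2, THEN conjunct2, THEN conjunct2]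
    have M0: "M \<ge> 0" using Mbounds(1)[OF HM, of 0 0] by simp
    have rep0: "\<And>q k. k > 0 \<Longrightarrow> fbar t q k = Gf eps f0 (Psi eps (q + cfun eps k * t, k))"
      using transport[OF e H1 t] G_rel[OF e H2 H3] by simp
    have GC: "cC1 S0 (Gf eps f0)" using G_C2[OF e f] unfolding cC2_def by simp
    have rep1: "\<And>q k. k > 0 \<Longrightarrow> Yop eps fbar t q k = E1 eps f0 (Psi eps (q + cfun eps k * t, k))"
      using YL[where h=fbar and t=t, OF e GC rep0] E1_eq[OF e f] Psi_S0[OF e] by simp
    have rep2: "\<And>q k. k > 0 \<Longrightarrow> Yop eps (Yop eps fbar) t q k = E2 eps f0 (Psi eps (q + cfun eps k * t, k))"
      using YL[where h="Yop eps fbar" and t=t, OF e E1_C1[OF e f] rep1] E2_eq[OF e f] Psi_S0[OF e] by simp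
    define p where "p = Psi eps (q + cfun eps k * t, k)"
    have pS: "p \<in> S0" unfolding p_def using Psi_S0[OF e] k by simp
    obtain c where pc: "p = (c, k)" unfolding p_def Psi_def by simp
    define n where "n = \<lfloor>c / (2 * pi)\<rfloor>"
    define c0 where "c0 = c + 2 * pi * of_int (- n)"
    have "of_int n \<le> c / (2 * pi)" "c / (2 * pi) < of_int n + 1" unfolding n_def by linarith+
    then have c0b: "0 \<le> c0" "c0 \<le> 2 * pi" unfolding c0_def by (auto simp: field_simps)
    have "kap eps p = kap eps (c0, k)" unfolding pc c0_def using per0_int[OF e kap_per[OF e] k, of c "- n"] by simp
    also have "\<dots> \<le> B" using B[of "(c0, k)"] c0b k1 k2 unfolding K_def by auto
    finally have kB: "kap eps p \<le> B" .
    have "(\<Sum>l\<le>(2::nat). \<bar>((Yop eps) ^^ l) fbar t q k\<bar>) = \<bar>fbar t q k\<bar> + \<bar>Yop eps fbar t q k\<bar> + \<bar>Yop eps (Yop eps fbar) t q k\<bar>"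
      by (simp add: numeral_2_eq_2)
    also have "\<dots> = \<bar>Gf eps f0 p\<bar> + \<bar>E1 eps f0 p\<bar> + \<bar>E2 eps f0 p\<bar>"
      unfolding p_def using rep0[OF k] rep1[OF k] rep2[OF k] by simp
    also have "\<dots> \<le> M * kap eps p" by (rule pw_bound[OF e f HM])
    also have "\<dots> \<le> M * B" using kB M0 by (rule mult_left_mono)
    also have "\<dots> = B * M" by (rule mult.commute)
    finally show "(\<Sum>l\<le>(2::nat). \<bar>((Yop eps) ^^ l) fbar t q k\<bar>) \<le> B * M" .
  qed
qed

end
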